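(* Let $E$ be a finite graph, let $R$ be a unital subring of $\mathbb C$ closed under complex conjugation that has an essentially unique partition of the unit, and let $u\in L_R(E)$ be a unitary ($uu^*=u^*u=1$). Then there exist paths $\alpha_1,\dots,\alpha_n,\beta_1,\dots,\beta_n\in E^*$ and $\lambda_1,\dots,\lambda_n\in R$ such that $u=\sum_{i=1}^n\lambda_i\alpha_i\beta_i^*$, $\sum_{i=1}^n\alpha_i\alpha_i^*=1$, $\sum_{i=1}^n\beta_i\beta_i^*=1$, and $|\lambda_i|=1$ for all $i$.
   Context: A unital subring $R\subseteq\mathbb C$ (containing $1$) closed under complex conjugation has an essentially unique partition of the unit if whenever $\lambda_1,\dots,\lambda_n\in R$ satisfy $\sum_{i=1}^n|\lambda_i|^2=1$, all but one of the $\lambda_i$ are zero. A graph $E=(E^0,E^1,r,s)$ has vertices $E^0$, edges $E^1$, and range and source maps $r,s$. A path is a word $e_1\cdots e_n$ with $r(e_i)=s(e_{i+1})$; vertices are paths of length $0$; $E^*$ is the set of finite paths. The Leavitt path algebra $L_R(E)$ is the universal $R$-algebra generated by pairwise orthogonal idempotents $\{v\}_{v\in E^0}$ and $\{e,e^*\}_{e\in E^1}$ with: $e^*f=0$ for $e\ne f$; $e^*e=r(e)$; $s(e)e=e=er(e)$; $e^*s(e)=e^*=r(e)e^*$; and $v=\sum_{e\in s^{-1}(v)}ee^*$ whenever $s^{-1}(v)$ is finite and nonempty. For $\alpha=e_1\cdots e_n$ put $\alpha^*=e_n^*\cdots e_1^*$. $L_R(E)$ carries the conjugate-linear involution $(\lambda\alpha\beta^*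 )^*=\overline\lambda\beta\alpha^*$, and for finite $E$, $1=\sum_{v\in E^0}v$. *)

theory Defs
  imports Complex_Main
begin

definition conj_subring :: "complex set \<Rightarrow> bool" where
  "conj_subring R \<longleftrightarrow> 0 \<in> R \<and> 1 \<in> R \<and>
     (\<forall>x\<in>R. \<forall>y\<in>R. x + y \<in> R \<and> x - y \<in> R \<and> x * y \<in> R) \<and>
     (\<forall>x\<in>R. cnj x \<in> R)"

definition ess_unique_partition_of_unit :: "complex set \<Rightarrow> bool" where
  "ess_unique_partition_of_unit R \<longleftrightarrow>
     (\<forall>(n::nat) (l::nat \<Rightarrow> complex). (\<forall>i<n. l i \<in> R) \<longrightarrow>
        (\<Sum>i<n. (cmod (l i))\<^sup>2) = 1 \<longrightarrow>
        (\<exists>j<n. \<forall>i<n. i \<noteq> j \<longrightarrow> l i = 0))"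

definition graph :: "'v set \<Rightarrow> 'e set \<Rightarrow> ('e \<Rightarrow> 'v) \<Rightarrow> ('e \<Rightarrow> 'v) \<Rightarrow> bool" where
  "graph E0 E1 r s \<longleftrightarrow> (\<forall>e\<in>E1. r e \<in> E0 \<and> s e \<in> E0)"

definition finite_graph :: "'v set \<Rightarrow> 'e set \<Rightarrow> ('e \<Rightarrow> 'v) \<Rightarrow> ('e \<Rightarrow> 'v) \<Rightarrow> bool" where
  "finite_graph E0 E1 r s \<longleftrightarrow> graph E0 E1 r s \<and> finite E0 \<and> finite E1"

text \<open>Finite paths: a pair (v, es). If es = [] this is the vertex v (a path of length 0);
  otherwise it is the edge word es, and v = s (hd es).\<close>
type_synonym ('v,'e) path = "'v \<times> 'e list"

fun edge_chain :: "('e \<Rightarrow> 'v) \<Rightarrow> ('e \<Rightarrow> 'v) \<Rightarrow> 'e list \<Rightarrow> bool" where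
  "edge_chain r s [] = True"
| "edge_chain r s [e] = True"
| "edge_chain r s (e # f # es) = (r e = s f \<and> edge_chain r s (f # es))"

definition paths :: "'v set \<Rightarrow> 'e set \<Rightarrow> ('e \<Rightarrow> 'v) \<Rightarrow> ('e \<Rightarrow> 'v) \<Rightarrow> ('v,'e) path set" where
  "paths E0 E1 r s = {(v, es). v \<in> E0 \<and> set es \<subseteq> E1 \<and>
      (es \<noteq> [] \<longrightarrow> s (hd es) = v) \<and> edge_chain r s es}"

datatype ('v,'e) gen = Vx 'v | Ed 'e | Gh 'e

type_synonym ('v,'e) fa = "('v,'e) gen list \<Rightarrow> complex"

definition gens :: "'v set \<Rightarrow> 'e set \<Rightarrow> ('v,'e) gen set" where
  "gens E0 E1 = Vx ` E0 \<union> Ed ` E1 \<union> Gh ` E1"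

text \<open>Elements of the free non-unital R-algebra on the generators: finitely supported
  R-valued coefficient functions on nonempty words in the generators.\<close>
definition free_alg :: "complex set \<Rightarrow> 'v set \<Rightarrow> 'e set \<Rightarrow> ('v,'e) fa set" where
  "free_alg R E0 E1 = {p. finite {w. p w \<noteq> 0} \<and> (\<forall>w. p w \<in> R) \<and> p [] = 0 \<and>
      (\<forall>w. p w \<noteq> 0 \<longrightarrow> set w \<subseteq> gens E0 E1)}"

definition mono :: "('v,'e) gen list \<Rightarrow> ('v,'e) fa" where
  "mono w = (\<lambda>x. if x = w then 1 else 0)"

definition fadd :: "('v,'e) fa \<Rightarrow> ('v,'e) fa \<Rightarrow> ('v,'e) fa" where
  "fadd p q = (\<lambda>w. p w + q w)"

definition fdiff :: "('v,'e) fa \<Rightarrow> ('v,'e) fa \<Rightarrow> ('v,'e) fa" where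
  "fdiff p q = (\<lambda>w. p w - q w)"

definition fsmult :: "complex \<Rightarrow> ('v,'e) fa \<Rightarrow> ('v,'e) fa" where
  "fsmult c p = (\<lambda>w. c * p w)"

definition fsum :: "('i \<Rightarrow> ('v,'e) fa) \<Rightarrow> 'i set \<Rightarrow> ('v,'e) fa" where
  "fsum f A = (\<lambda>w. \<Sum>i\<in>A. f i w)"

text \<open>Multiplication = concatenation of words, extended bilinearly.\<close>
definition fmult :: "('v,'e) fa \<Rightarrow> ('v,'e) fa \<Rightarrow> ('v,'e) fa" where
  "fmult p q = (\<lambda>w. \<Sum>i\<le>length w. p (take i w) * q (drop i w))"

fun gstar :: "('v,'e) gen \<Rightarrow> ('v,'e) gen" where
  "gstar (Vx v) = Vx v"
| "gstar (Ed e) = Gh e"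
| "gstar (Gh e) = Ed e"

definition fstar :: "('v,'e) fa \<Rightarrow> ('v,'e) fa" where
  "fstar p = (\<lambda>w. cnj (p (rev (map gstar w))))"

text \<open>The defining relations of L_R(E), each written as an element (LHS - RHS).\<close>
definition lpa_relations ::
  "'v set \<Rightarrow> 'e set \<Rightarrow> ('e \<Rightarrow> 'v) \<Rightarrow> ('e \<Rightarrow> 'v) \<Rightarrow> ('v,'e) fa set" where
  "lpa_relations E0 E1 r s =
     {mono [Vx v, Vx w] | v w. v \<in> E0 \<and> w \<in> E0 \<and> v \<noteq> w}
   \<union> {fdiff (mono [Vx v, Vx v]) (mono [Vx v]) | v. v \<in> E0}
   \<union> {mono [Gh e, Ed f] | e f. e \<in> E1 \<and> f \<in> E1 \<and> e \<noteq> f}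
   \<union> {fdiff (mono [Gh e, Ed e]) (mono [Vx (r e)]) | e. e \<in> E1}
   \<union> {fdiff (mono [Vx (s e), Ed e]) (mono [Ed e]) | e. e \<in> E1}
   \<union> {fdiff (mono [Ed e, Vx (r e)]) (mono [Ed e]) | e. e \<in> E1}
   \<union> {fdiff (mono [Gh e, Vx (s e)]) (mono [Gh e]) | e. e \<in> E1}
   \<union> {fdiff (mono [Vx (r e), Gh e]) (mono [Gh e]) | e. e \<in> E1}
   \<union> {fdiff (mono [Vx v]) (fsum (\<lambda>e. mono [Ed e, Gh e]) {e \<in> E1. s e = v}) | v.
        v \<in> E0 \<and> finite {e \<in> E1. s e = v} \<and> {e \<in> E1. s e = v} \<noteq> {}}"

inductive_set lpa_ideal ::
  "complex set \<Rightarrow> 'v set \<Rightarrow> 'e set \<Rightarrow> ('e \<Rightarrow> 'v) \<Rightarrow> ('e \<Rightarrow> 'v) \<Rightarrow> ('v,'e) fa set"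
  for R E0 E1 r s where
  zero: "(\<lambda>_. 0) \<in> lpa_ideal R E0 E1 r s"
| rel: "g \<in> lpa_relations E0 E1 r s \<Longrightarrow> g \<in> lpa_ideal R E0 E1 r s"
| add: "p \<in> lpa_ideal R E0 E1 r s \<Longrightarrow> q \<in> lpa_ideal R E0 E1 r s \<Longrightarrow>
          fadd p q \<in> lpa_ideal R E0 E1 r s"
| smult: "c \<in> R \<Longrightarrow> p \<in> lpa_ideal R E0 E1 r s \<Longrightarrow> fsmult c p \<in> lpa_ideal R E0 E1 r s"
| lmult: "x \<in> gens E0 E1 \<Longrightarrow> p \<in> lpa_ideal R E0 E1 r s \<Longrightarrow>
          fmult (mono [x]) p \<in> lpa_ideal R E0 E1 r s"
| rmult: "x \<in> gens E0 E1 \<Longrightarrow> p \<in> lpa_ideal R E0 E1 r s \<Longrightarrow>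
          fmult p (mono [x]) \<in> lpa_ideal R E0 E1 r s"

definition lpa_eq ::
  "complex set \<Rightarrow> 'v set \<Rightarrow> 'e set \<Rightarrow> ('e \<Rightarrow> 'v) \<Rightarrow> ('e \<Rightarrow> 'v) \<Rightarrow>
   ('v,'e) fa \<Rightarrow> ('v,'e) fa \<Rightarrow> bool" where
  "lpa_eq R E0 E1 r s p q \<longleftrightarrow> fdiff p q \<in> lpa_ideal R E0 E1 r s"

definition lpa_one :: "'v set \<Rightarrow> ('v,'e) fa" where
  "lpa_one E0 = fsum (\<lambda>v. mono [Vx v]) E0"

definition path_elt :: "('v,'e) path \<Rightarrow> ('v,'e) fa" where
  "path_elt \<alpha> = (if snd \<alpha> = [] then mono [Vx (fst \<alpha>)] else mono (map Ed (snd \<alpha>)))"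

end

theory Submission
  imports Defs
begin

definition fsupp :: "('v,'e) fa \<Rightarrow> ('v,'e) gen list set" where
  "fsupp p = {w. p w \<noteq> 0}"

lemma take_eq_iff_len: "i \<le> length w \<Longrightarrow> (take i w = v) = (i = length v \<and> take (length v) w = v)"
  by auto

lemma fmult_mono_left:
  "fmult (mono v) p w = (if take (length v) w = v then p (drop (length v) w) else 0)"
proof -
  have "fmult (mono v) p w = (\<Sum>i\<le>length w. (if i = length v \<and> take (length v) w = v then p (drop i w) else 0))"
    unfolding fmult_def mono_def
    by (rule sum.cong) (auto)
  also have "\<dots> = (if take (length v) w = v then p (drop (length v) w) else 0)"
  proof (cases "take (length v) w = v")
    case True
    then have "length (take (length v) w) = length v" by (simp only:)
    then have "length v \<le> length w" by (simp add: min_def split: if_splits)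
    then show ?thesis using True by (simp add: sum.delta)
  qed simp
  finally show ?thesis .
qed

lemma fmult_mono_right:
  "fmult p (mono v) w = (if length v \<le> length w \<and> drop (length w - length v) w = v
      then p (take (length w - length v) w) else 0)"
proof -
  have "fmult p (mono v) w = (\<Sum>i\<le>length w. (if i = length w - length v \<and> length v \<le> length w \<and> drop (length w - length v) w = v then p (take i w) else 0))"
    unfolding fmult_def mono_def
    by (rule sum.cong) auto
  also have "\<dots> = (if length v \<le> length w \<and> drop (length w - length v) w = v
      then p (take (length w - length v) w) else 0)"
    by (cases "length v \<le> length w"; cases "drop (length w - length v) w = v") (simp_all add: sum.delta)
  finally show ?thesis .
qed

lemma mono_mult: "fmult (mono a) (mono b) = mono (a @ b)"
proof
  fix w
  show "fmult (mono a) (mono b) w = mono (a @ b) w"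
    unfolding fmult_mono_left
    apply (simp add: mono_def)
    by (metis append_eq_conv_conj append_take_drop_id)
qed

lemma fmult_fsum_left: "fmult (fsum f A) b = fsum (\<lambda>i. fmult (f i) b) A"
  unfolding fmult_def fsum_def
  by (rule ext) (simp add: sum_distrib_right sum.swap[where A=A])

lemma fmult_fsum_right: "fmult b (fsum f A) = fsum (\<lambda>i. fmult b (f i)) A"
  unfolding fmult_def fsum_def
  by (rule ext) (simp add: sum_distrib_left sum.swap[where A=A])

lemma fmult_fsmult_left: "fmult (fsmult c a) b = fsmult c (fmult a b)"
  unfolding fmult_def fsmult_def by (rule ext) (simp add: sum_distrib_left mult.assoc)

lemma fmult_fsmult_right: "fmult a (fsmult c b) = fsmult c (fmult a b)"
  unfolding fmult_def fsmult_def by (rule ext) (simp add: sum_distrib_left mult.left_commute)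

lemma fmult_fdiff_left: "fmult (fdiff a a') b = fdiff (fmult a b) (fmult a' b)"
  unfolding fmult_def fdiff_def by (rule ext) (simp add: sum_subtractf left_diff_distrib)

lemma fmult_fdiff_right: "fmult b (fdiff a a') = fdiff (fmult b a) (fmult b a')"
  unfolding fmult_def fdiff_def by (rule ext) (simp add: sum_subtractf right_diff_distrib)

lemma fmult_fadd_left: "fmult (fadd a a') b = fadd (fmult a b) (fmult a' b)"
  unfolding fmult_def fadd_def by (rule ext) (simp add: sum.distrib distrib_right)

lemma fmult_fadd_right: "fmult b (fadd a a') = fadd (fmult b a) (fmult b a')"
  unfolding fmult_def fadd_def by (rule ext) (simp add: sum.distrib distrib_left)

lemma expand:
  assumes "finite S" "fsupp a \<subseteq> S"
  shows "a = fsum (\<lambda>v. fsmult (a v) (mono v)) S"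
proof
  fix w
  have "fsum (\<lambda>v. fsmult (a v) (mono v)) S w = (\<Sum>v\<in>S. if v = w then a w else 0)"
    unfolding fsum_def fsmult_def mono_def by (rule sum.cong) auto
  also have "\<dots> = a w" using assms by (auto simp: sum.delta fsupp_def)
  finally show "a w = fsum (\<lambda>v. fsmult (a v) (mono v)) S w" by simp
qed

lemma fmult_expand_left:
  assumes "finite S" "fsupp a \<subseteq> S"
  shows "fmult a b = fsum (\<lambda>v. fsmult (a v) (fmult (mono v) b)) S"
  apply (subst expand[OF assms])
  by (simp add: fmult_fsum_left fmult_fsmult_left)

lemma fmult_expand_right:
  assumes "finite S" "fsupp b \<subseteq> S"
  shows "fmult a b = fsum (\<lambda>v. fsmult (b v) (fmult a (mono v))) S"
  apply (subst expand[OF assms])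
  by (simp add: fmult_fsum_right fmult_fsmult_right)

lemma take_take_ne: "take (length v) (take i w) = v \<Longrightarrow> length v \<le> i \<and> take (length v) w = v"
proof -
  assume a: "take (length v) (take i w) = v"
  have "length (take (length v) (take i w)) = length v" using a by (simp only:)
  then have "length v \<le> i" by (simp add: min_def split: if_splits)
  then show ?thesis using a by (simp add: min_def)
qed

lemma assoc_mono:
  fixes v :: "('v,'e) gen list" and b c :: "('v,'e) fa"
  shows "fmult (fmult (mono v) b) c = fmult (mono v) (fmult b c)"
proof
  fix w :: "('v,'e) gen list"
  let ?n = "length w" and ?m = "length v"
  show "fmult (fmult (mono v) b) c w = fmult (mono v) (fmult b c) w"
  proof (cases "take ?m w = v")
    case False
    have "fmult (fmult (mono v) b) c w = 0"
      unfolding fmult_def[of _ c] fmult_mono_left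
      apply (rule sum.neutral)
      using False take_take_ne by fastforce
    then show ?thesis using False by (simp add: fmult_mono_left)
  next
    case True
    then have "length (take ?m w) = ?m" by (simp only:)
    then have mn: "?m \<le> ?n" by (simp add: min_def split: if_splits)
    have "fmult (fmult (mono v) b) c w = (\<Sum>i\<in>{?m..?n}. b (drop ?m (take i w)) * c (drop i w))"
      unfolding fmult_def[of _ c] fmult_mono_left
    proof (rule sum.mono_neutral_cong_right)
      show "\<forall>i\<in>{..?n} - {?m..?n}. (if take ?m (take i w) = v then b (drop ?m (take i w)) else 0) * c (drop i w) = 0"
        using take_take_ne by fastforce
      show "\<And>i. i \<in> {?m..?n} \<Longrightarrow> (if take ?m (take i w) = v then b (drop ?m (take i w)) else 0) * c (drop i w) = b (drop ?m (take i w)) * c (drop i w)"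
        using True by (simp add: min_def)
    qed auto
    also have "\<dots> = (\<Sum>k\<in>{0..?n - ?m}. b (drop ?m (take (k + ?m) w)) * c (drop (k + ?m) w))"
      using mn by (subst sum.atLeastAtMost_shift_0) (simp_all add: add.commute)
    also have "\<dots> = (\<Sum>k\<le>length (drop ?m w). b (take k (drop ?m w)) * c (drop k (drop ?m w)))"
      by (rule sum.cong) (auto simp: atMost_atLeast0 take_drop add.commute)
    also have "\<dots> = fmult (mono v) (fmult b c) w"
      using True by (simp only: fmult_mono_left if_True) (simp add: fmult_def)
    finally show ?thesis .
  qed
qed

lemma fmult_assoc:
  assumes "finite (fsupp a)"
  shows "fmult (fmult a b) c = fmult a (fmult b c)"
proof -
  have e: "\<And>X. fmult a X = fsum (\<lambda>v. fsmult (a v) (fmult (mono v) X)) (fsupp a)"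
    using fmult_expand_left[OF assms] by simp
  show ?thesis
    unfolding e fmult_fsum_left fmult_fsmult_left assoc_mono ..
qed

lemma gstar_gstar[simp]: "gstar (gstar g) = g" by (cases g) auto

lemma gstar_Ed_comp[simp]: "gstar \<circ> Ed = Gh" by (rule ext) simp
lemma gstar_Gh_comp[simp]: "gstar \<circ> Gh = Ed" by (rule ext) simp

lemma gstar_comp[simp]: "gstar \<circ> gstar = id" by (rule ext) simp

lemma rmt: "rev (map f (take x w)) = drop (length w - x) (rev (map f w))"
  by (metis length_map rev_take take_map)

lemma rmd: "rev (map f (drop x w)) = take (length w - x) (rev (map f w))"
  by (metis length_map rev_drop drop_map)

lemma map_gstar_gstar[simp]: "map gstar (map gstar w) = w" by (induct w) auto

lemma fstar_fstar[simp]: "fstar (fstar p) = p"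
  unfolding fstar_def by (simp add: rev_map)

lemma star_word_eq: "(rev (map gstar x) = w) = (x = rev (map gstar w))"
  by (metis map_gstar_gstar rev_map rev_rev_ident)

lemma fstar_mono: "fstar (mono w) = mono (rev (map gstar w))"
  unfolding fstar_def mono_def by (rule ext) (simp add: star_word_eq)

lemma fstar_fdiff: "fstar (fdiff p q) = fdiff (fstar p) (fstar q)"
  unfolding fstar_def fdiff_def by auto

lemma fstar_fadd: "fstar (fadd p q) = fadd (fstar p) (fstar q)"
  unfolding fstar_def fadd_def by auto

lemma fstar_fsmult: "fstar (fsmult c p) = fsmult (cnj c) (fstar p)"
  unfolding fstar_def fsmult_def by auto

lemma fstar_fsum: "fstar (fsum f A) = fsum (\<lambda>i. fstar (f i)) A"
  unfolding fstar_def fsum_def by auto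

lemma fstar_zero: "fstar (\<lambda>_. 0) = (\<lambda>_. 0)"
  unfolding fstar_def by auto

lemma fstar_fmult: "fstar (fmult a b) = fmult (fstar b) (fstar a)"
proof
  fix w :: "('a,'b) gen list"
  define w' where "w' = rev (map gstar w)"
  define n where "n = length w"
  have ln: "length w' = n" unfolding w'_def n_def by simp
  have "fmult (fstar b) (fstar a) w = (\<Sum>j\<in>{0..n}. cnj (b (drop (n - j) w')) * cnj (a (take (n - j) w')))"
    unfolding fmult_def fstar_def n_def w'_def
    by (rule sum.cong) (auto simp: atMost_atLeast0 rmt rmd)
  also have "\<dots> = (\<Sum>j\<in>{0..n}. cnj (b (drop j w')) * cnj (a (take j w')))"
    by (subst sum.atLeastAtMost_rev) (rule sum.cong, auto)
  also have "\<dots> = fstar (fmult a b) w"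
    unfolding fstar_def fmult_def using ln
    by (simp add: w'_def[symmetric] atMost_atLeast0 mult.commute)
  finally show "fstar (fmult a b) w = fmult (fstar b) (fstar a) w" by simp
qed

lemma fmult_mono_nil: "fmult (mono []) p = p"
  by (rule ext) (simp add: fmult_mono_left)

lemma fmult_mono_nil_right: "fmult p (mono []) = p"
  by (rule ext) (simp add: fmult_mono_right)

lemma fsum_empty: "fsum f {} = (\<lambda>_. 0)" unfolding fsum_def by simp

lemma fsum_insert: "finite A \<Longrightarrow> x \<notin> A \<Longrightarrow> fsum f (insert x A) = fadd (f x) (fsum f A)"
  unfolding fsum_def fadd_def by auto

lemma fsum_fdiff: "fdiff (fsum f A) (fsum g A) = fsum (\<lambda>i. fdiff (f i) (g i)) A"
  unfolding fsum_def fdiff_def by (rule ext) (simp add: sum_subtractf)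

lemma fsum_cong: "(\<And>i. i \<in> A \<Longrightarrow> f i = g i) \<Longrightarrow> fsum f A = fsum g A"
  unfolding fsum_def by auto

lemma gstar_in_gens: "x \<in> gens E0 E1 \<Longrightarrow> gstar x \<in> gens E0 E1"
  unfolding gens_def by auto

locale lpa =
  fixes R :: "complex set" and E0 :: "'v set" and E1 :: "'e set" and r s :: "'e \<Rightarrow> 'v"
  assumes fg: "finite_graph E0 E1 r s" and cs: "conj_subring R"
begin

abbreviation "I \<equiv> lpa_ideal R E0 E1 r s"
abbreviation "G \<equiv> gens E0 E1"
abbreviation leq (infix "\<approx>" 50) where "leq p q \<equiv> lpa_eq R E0 E1 r s p q"

lemma finE0: "finite E0" and finE1: "finite E1" and rE0: "e \<in> E1 \<Longrightarrow> r e \<in> E0"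
  and sE0: "e \<in> E1 \<Longrightarrow> s e \<in> E0"
  using fg unfolding finite_graph_def graph_def by auto

lemma R0: "0 \<in> R" and R1: "1 \<in> R" and Radd: "x \<in> R \<Longrightarrow> y \<in> R \<Longrightarrow> x + y \<in> R"
  and Rdiff: "x \<in> R \<Longrightarrow> y \<in> R \<Longrightarrow> x - y \<in> R"
  and Rmult: "x \<in> R \<Longrightarrow> y \<in> R \<Longrightarrow> x * y \<in> R"
  and Rcnj: "x \<in> R \<Longrightarrow> cnj x \<in> R"
  using cs unfolding conj_subring_def by auto

lemma Rneg1: "-1 \<in> R" using Rdiff[OF R0 R1] by simp

lemma Rsum: "(\<And>i. i \<in> A \<Longrightarrow> f i \<in> R) \<Longrightarrow> sum f A \<in> R"
proof (induction A rule: infinite_finite_induct)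
  case (infinite A) then show ?case using R0 by simp
next
  case empty then show ?case using R0 by simp
next
  case (insert x F) then show ?case using Radd by simp
qed

definition good :: "('v,'e) fa \<Rightarrow> bool" where
  "good p \<longleftrightarrow> finite (fsupp p) \<and> (\<forall>w. p w \<in> R) \<and> (\<forall>w. p w \<noteq> 0 \<longrightarrow> set w \<subseteq> G)"

lemma I_fsum: "finite A \<Longrightarrow> (\<And>i. i \<in> A \<Longrightarrow> f i \<in> I) \<Longrightarrow> fsum f A \<in> I"
proof (induction A rule: finite_induct)
  case empty then show ?case by (simp add: fsum_empty lpa_ideal.zero)
next
  case (insert x F) then show ?case by (simp add: fsum_insert lpa_ideal.add)
qed

lemma I_lmono: "p \<in> I \<Longrightarrow> set v \<subseteq> G \<Longrightarrow> fmult (mono v) p \<in> I"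
proof (induction v)
  case Nil then show ?case by (simp add: fmult_mono_nil)
next
  case (Cons g v)
  have "mono (g # v) = fmult (mono [g]) (mono v)" by (simp add: mono_mult)
  then show ?case using Cons by (simp add: assoc_mono lpa_ideal.lmult)
qed

lemma rel_fstar: "g \<in> lpa_relations E0 E1 r s \<Longrightarrow> fstar g \<in> lpa_relations E0 E1 r s"
  unfolding lpa_relations_def
  apply (elim UnE CollectE exE conjE)
  apply (simp_all add: fstar_mono fstar_fdiff fstar_fsum)
  apply blast+
  done

lemma I_fstar: "p \<in> I \<Longrightarrow> fstar p \<in> I"
proof (induction rule: lpa_ideal.induct)
  case zero then show ?case by (simp add: fstar_zero lpa_ideal.zero)
next
  case (rel g) then show ?case by (simp add: rel_fstar lpa_ideal.rel)
next
  case (add p q) then show ?case by (simp add: fstar_fadd lpa_ideal.add)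
next
  case (smult c p) then show ?case by (simp add: fstar_fsmult lpa_ideal.smult Rcnj)
next
  case (lmult x p) then show ?case
    by (simp add: fstar_fmult fstar_mono lpa_ideal.rmult gstar_in_gens)
next
  case (rmult x p) then show ?case
    by (simp add: fstar_fmult fstar_mono lpa_ideal.lmult gstar_in_gens)
qed

lemma I_rmono: "p \<in> I \<Longrightarrow> set v \<subseteq> G \<Longrightarrow> fmult p (mono v) \<in> I"
proof -
  assume a: "p \<in> I" "set v \<subseteq> G"
  have "set (rev (map gstar v)) \<subseteq> G" using a(2) gstar_in_gens by auto
  then have "fmult (mono (rev (map gstar v))) (fstar p) \<in> I" using I_lmono I_fstar a by blast
  then have "fstar (fmult (mono (rev (map gstar v))) (fstar p)) \<in> I" by (rule I_fstar)
  then show ?thesis by (simp add: fstar_fmult fstar_mono rev_map)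
qed

lemma I_lmult: "good a \<Longrightarrow> p \<in> I \<Longrightarrow> fmult a p \<in> I"
  unfolding good_def
  apply (subst fmult_expand_left[where S="fsupp a"])
    apply (auto intro!: I_fsum lpa_ideal.smult I_lmono simp: fsupp_def)
  done

lemma I_rmult: "good a \<Longrightarrow> p \<in> I \<Longrightarrow> fmult p a \<in> I"
  unfolding good_def
  apply (subst fmult_expand_right[where S="fsupp a"])
    apply (auto intro!: I_fsum lpa_ideal.smult I_rmono simp: fsupp_def)
  done

lemma eq_refl: "p \<approx> p"
  unfolding lpa_eq_def fdiff_def by (simp add: lpa_ideal.zero)

lemma eq_sym: "p \<approx> q \<Longrightarrow> q \<approx> p"
proof -
  assume "p \<approx> q"
  then have "fsmult (-1) (fdiff p q) \<in> I" unfolding lpa_eq_def by (rule lpa_ideal.smult[OF Rneg1])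
  moreover have "fsmult (-1) (fdiff p q) = fdiff q p" unfolding fsmult_def fdiff_def by auto
  ultimately show ?thesis unfolding lpa_eq_def by simp
qed

lemma eq_trans: "p \<approx> q \<Longrightarrow> q \<approx> t \<Longrightarrow> p \<approx> t"
proof -
  assume "p \<approx> q" "q \<approx> t"
  then have "fadd (fdiff p q) (fdiff q t) \<in> I" unfolding lpa_eq_def by (rule lpa_ideal.add)
  moreover have "fadd (fdiff p q) (fdiff q t) = fdiff p t" unfolding fadd_def fdiff_def by auto
  ultimately show ?thesis unfolding lpa_eq_def by simp
qed

lemma eq_I: "p \<in> I \<Longrightarrow> p \<approx> (\<lambda>_. 0)"
  unfolding lpa_eq_def fdiff_def by simp

lemma eq_fsum: "finite A \<Longrightarrow> (\<And>i. i \<in> A \<Longrightarrow> f i \<approx> g i) \<Longrightarrow> fsum f A \<approx> fsum g A"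
  unfolding lpa_eq_def fsum_fdiff by (rule I_fsum)

lemma eq_smult: "c \<in> R \<Longrightarrow> p \<approx> q \<Longrightarrow> fsmult c p \<approx> fsmult c q"
proof -
  assume a: "c \<in> R" "p \<approx> q"
  have "fdiff (fsmult c p) (fsmult c q) = fsmult c (fdiff p q)"
    unfolding fsmult_def fdiff_def by (auto simp: right_diff_distrib)
  then show ?thesis using a unfolding lpa_eq_def by (simp add: lpa_ideal.smult)
qed

lemma eq_lmult: "good a \<Longrightarrow> p \<approx> q \<Longrightarrow> fmult a p \<approx> fmult a q"
  unfolding lpa_eq_def fmult_fdiff_right[symmetric] by (rule I_lmult)

lemma eq_rmult: "good a \<Longrightarrow> p \<approx> q \<Longrightarrow> fmult p a \<approx> fmult q a"
  unfolding lpa_eq_def fmult_fdiff_left[symmetric] by (rule I_rmult)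

lemma eq_star: "p \<approx> q \<Longrightarrow> fstar p \<approx> fstar q"
  unfolding lpa_eq_def fstar_fdiff[symmetric] by (rule I_fstar)

lemma eq_rel: "fdiff p q \<in> lpa_relations E0 E1 r s \<Longrightarrow> p \<approx> q"
  unfolding lpa_eq_def by (rule lpa_ideal.rel)

lemma eq_rel0: "p \<in> lpa_relations E0 E1 r s \<Longrightarrow> p \<approx> (\<lambda>_. 0)"
  by (rule eq_I) (rule lpa_ideal.rel)

end

lemma fmult_zero_left: "fmult (\<lambda>_. 0) p = (\<lambda>_. 0)" unfolding fmult_def by simp
lemma fmult_zero_right: "fmult p (\<lambda>_. 0) = (\<lambda>_. 0)" unfolding fmult_def by simp

definition cw :: "('v,'e) path \<Rightarrow> ('v,'e) gen list" where
  "cw q = (if snd q = [] then [Vx (fst q)] else map Ed (snd q))"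

lemma path_elt_cw: "path_elt q = mono (cw q)"
  unfolding path_elt_def cw_def by simp

fun nghost :: "('v,'e) gen list \<Rightarrow> nat" where
  "nghost [] = 0"
| "nghost (Gh e # w) = Suc (nghost w)"
| "nghost (Vx v # w) = nghost w"
| "nghost (Ed e # w) = nghost w"

lemma nghost_append: "nghost (a @ b) = nghost a + nghost b"
proof (induction a)
  case (Cons g a) then show ?case by (cases g) auto
qed simp

lemma edge_chain_Cons: "edge_chain r s (e # es) = (edge_chain r s es \<and> (es \<noteq> [] \<longrightarrow> r e = s (hd es)))"
  by (cases es) auto

lemma paths_iff: "(v, es) \<in> paths E0 E1 r s \<longleftrightarrow> v \<in> E0 \<and> set es \<subseteq> E1 \<and> (es \<noteq> [] \<longrightarrow> s (hd es) = v) \<and> edge_chain r s es"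
  unfolding paths_def by auto

context lpa begin

definition rend :: "('v,'e) path \<Rightarrow> 'v" where
  "rend q = (if snd q = [] then fst q else r (last (snd q)))"

definition plen :: "('v,'e) path \<Rightarrow> nat" where "plen q = length (snd q)"

definition sink :: "'v \<Rightarrow> bool" where "sink v \<longleftrightarrow> (\<forall>e\<in>E1. s e \<noteq> v)"

lemma good_mono: "set w \<subseteq> G \<Longrightarrow> good (mono w)"
  unfolding good_def mono_def fsupp_def using R0 R1 by auto

lemma good_zero: "good (\<lambda>_. 0)" unfolding good_def fsupp_def using R0 by auto

lemma good_fsmult: "c \<in> R \<Longrightarrow> good p \<Longrightarrow> good (fsmult c p)"
  unfolding good_def fsmult_def fsupp_def
  by (auto intro: Rmult elim: rev_finite_subset)

lemma good_fadd: "good p \<Longrightarrow> good q \<Longrightarrow> good (fadd p q)"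
  unfolding good_def fadd_def fsupp_def
  apply (intro conjI)
    apply (rule finite_subset[of _ "{w. p w \<noteq> 0} \<union> {w. q w \<noteq> 0}"])
     apply auto[2]
   apply (auto intro: Radd)[1]
  by (metis add.right_neutral add_0)

lemma good_fsum: "finite A \<Longrightarrow> (\<And>i. i \<in> A \<Longrightarrow> good (f i)) \<Longrightarrow> good (fsum f A)"
proof (induction A rule: finite_induct)
  case empty then show ?case by (simp add: fsum_empty good_zero)
next
  case (insert x F) then show ?case by (simp add: fsum_insert good_fadd)
qed

lemma rev_star_star[simp]: "rev (map gstar (rev (map gstar w))) = w" by (simp add: rev_map)

lemma fsupp_fstar: fixes p :: "('v,'e) fa" shows "fsupp (fstar p) = (\<lambda>w. rev (map gstar w)) ` fsupp p"
proof (rule set_eqI)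
  fix x :: "('v,'e) gen list"
  show "x \<in> fsupp (fstar p) \<longleftrightarrow> x \<in> (\<lambda>w. rev (map gstar w)) ` fsupp p"
  proof
    assume "x \<in> fsupp (fstar p)"
    then have "rev (map gstar x) \<in> fsupp p" by (simp add: fsupp_def fstar_def)
    moreover have "x = rev (map gstar (rev (map gstar x)))" by simp
    ultimately show "x \<in> (\<lambda>w. rev (map gstar w)) ` fsupp p" by (rule image_eqI[rotated])
  next
    assume "x \<in> (\<lambda>w. rev (map gstar w)) ` fsupp p"
    then obtain y where y: "y \<in> fsupp p" "x = rev (map gstar y)" by blast
    then show "x \<in> fsupp (fstar p)" by (simp add: fsupp_def fstar_def)
  qed
qed

lemma good_fstar: "good p \<Longrightarrow> good (fstar p)"
proof -
  assume g: "good p"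
  have fin: "finite (fsupp (fstar p))" using g unfolding fsupp_fstar good_def by simp
  have vals: "fstar p w \<in> R" for w using g unfolding good_def fstar_def by (simp add: Rcnj)
  have words: "set w \<subseteq> G" if "fstar p w \<noteq> 0" for w
  proof
    fix x assume x: "x \<in> set w"
    have "p (rev (map gstar w)) \<noteq> 0" using that unfolding fstar_def by simp
    then have "set (rev (map gstar w)) \<subseteq> G" using g unfolding good_def by blast
    then have "gstar x \<in> G" using x by auto
    then show "x \<in> G" using gstar_in_gens[of "gstar x"] by simp
  qed
  show ?thesis unfolding good_def using fin vals words by (intro conjI allI impI)
qed

lemma good_fmult: "good a \<Longrightarrow> good b \<Longrightarrow> good (fmult a b)"
proof -
  assume ga: "good a" and gb: "good b"
  have sub: "fsupp (fmult a b) \<subseteq> (\<lambda>(x,y). x @ y) ` (fsupp a \<times> fsupp b)"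
  proof
    fix w assume "w \<in> fsupp (fmult a b)"
    then have "(\<Sum>i\<le>length w. a (take i w) * b (drop i w)) \<noteq> 0" unfolding fsupp_def fmult_def by simp
    then obtain i where "a (take i w) * b (drop i w) \<noteq> 0" by (meson sum.not_neutral_contains_not_neutral)
    then have m: "(take i w, drop i w) \<in> fsupp a \<times> fsupp b" unfolding fsupp_def by simp
    have "w = (\<lambda>(x,y). x @ y) (take i w, drop i w)" by simp
    then show "w \<in> (\<lambda>(x,y). x @ y) ` (fsupp a \<times> fsupp b)" using m by (rule image_eqI)
  qed
  have fin: "finite (fsupp (fmult a b))"
    apply (rule finite_subset[OF sub])
    using ga gb unfolding good_def by simp
  have vals: "fmult a b w \<in> R" for w
    unfolding fmult_def using ga gb unfolding good_def by (intro Rsum Rmult) blast+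
  have words: "set w \<subseteq> G" if "fmult a b w \<noteq> 0" for w
  proof -
    have "w \<in> fsupp (fmult a b)" using that unfolding fsupp_def by simp
    then have "w \<in> (\<lambda>(x,y). x @ y) ` (fsupp a \<times> fsupp b)" by (rule subsetD[OF sub])
    then obtain x y where xy: "(x, y) \<in> fsupp a \<times> fsupp b" "w = x @ y" by auto
    have "set x \<subseteq> G" using ga xy unfolding good_def fsupp_def by blast
    moreover have "set y \<subseteq> G" using gb xy unfolding good_def fsupp_def by blast
    ultimately show ?thesis using xy by simp
  qed
  show ?thesis unfolding good_def using fin vals words by (intro conjI allI impI)
qed

lemma good_lpa_one: "good (lpa_one E0)"
  unfolding lpa_one_def using finE0
  by (auto intro!: good_fsum good_mono simp: gens_def)

lemma cw_gens: "q \<in> paths E0 E1 r s \<Longrightarrow> set (cw q) \<subseteq> G"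
  unfolding cw_def paths_def gens_def by auto

lemma good_path: "q \<in> paths E0 E1 r s \<Longrightarrow> good (path_elt q)"
  by (simp add: path_elt_cw good_mono cw_gens)

lemma ctx: "p \<approx> q \<Longrightarrow> set a \<subseteq> G \<Longrightarrow> set b \<subseteq> G \<Longrightarrow>
   fmult (mono a) (fmult p (mono b)) \<approx> fmult (mono a) (fmult q (mono b))"
  by (intro eq_lmult eq_rmult good_mono)

lemma rw: "fdiff (mono x) (mono y) \<in> lpa_relations E0 E1 r s \<Longrightarrow> set a \<subseteq> G \<Longrightarrow> set b \<subseteq> G \<Longrightarrow>
   mono (a @ x @ b) \<approx> mono (a @ y @ b)"
  using ctx[OF eq_rel[of "mono x" "mono y"], where a=a and b=b] by (simp add: mono_mult)

lemma rw0: "mono x \<in> lpa_relations E0 E1 r s \<Longrightarrow> set a \<subseteq> G \<Longrightarrow> set b \<subseteq> G \<Longrightarrow>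
   mono (a @ x @ b) \<approx> (\<lambda>_. 0)"
  using ctx[OF eq_rel0[of "mono x"], where a=a and b=b] by (simp add: mono_mult fmult_zero_left fmult_zero_right)

end

context lpa begin

lemma rel_vv: "v \<in> E0 \<Longrightarrow> w \<in> E0 \<Longrightarrow> v \<noteq> w \<Longrightarrow> mono [Vx v, Vx w] \<in> lpa_relations E0 E1 r s"
  unfolding lpa_relations_def
  apply (rule UnI1)
  apply (rule UnI1)
  apply (rule UnI1)
  apply (rule UnI1)
  apply (rule UnI1)
  apply (rule UnI1)
  apply (rule UnI1)
  apply (rule UnI1)
  by blast
lemma rel_videm: "v \<in> E0 \<Longrightarrow> fdiff (mono [Vx v, Vx v]) (mono [Vx v]) \<in> lpa_relations E0 E1 r s"
  unfolding lpa_relations_def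
  apply (rule UnI1)
  apply (rule UnI1)
  apply (rule UnI1)
  apply (rule UnI1)
  apply (rule UnI1)
  apply (rule UnI1)
  apply (rule UnI1)
  apply (rule UnI2)
  by blast
lemma rel_ghe: "e \<in> E1 \<Longrightarrow> f \<in> E1 \<Longrightarrow> e \<noteq> f \<Longrightarrow> mono [Gh e, Ed f] \<in> lpa_relations E0 E1 r s"
  unfolding lpa_relations_def
  apply (rule UnI1)
  apply (rule UnI1)
  apply (rule UnI1)
  apply (rule UnI1)
  apply (rule UnI1)
  apply (rule UnI1)
  apply (rule UnI2)
  by blast
lemma rel_ee: "e \<in> E1 \<Longrightarrow> fdiff (mono [Gh e, Ed e]) (mono [Vx (r e)]) \<in> lpa_relations E0 E1 r s"
  unfolding lpa_relations_def
  apply (rule UnI1)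
  apply (rule UnI1)
  apply (rule UnI1)
  apply (rule UnI1)
  apply (rule UnI1)
  apply (rule UnI2)
  by blast
lemma rel_se: "e \<in> E1 \<Longrightarrow> fdiff (mono [Vx (s e), Ed e]) (mono [Ed e]) \<in> lpa_relations E0 E1 r s"
  unfolding lpa_relations_def
  apply (rule UnI1)
  apply (rule UnI1)
  apply (rule UnI1)
  apply (rule UnI1)
  apply (rule UnI2)
  by blast
lemma rel_er: "e \<in> E1 \<Longrightarrow> fdiff (mono [Ed e, Vx (r e)]) (mono [Ed e]) \<in> lpa_relations E0 E1 r s"
  unfolding lpa_relations_def
  apply (rule UnI1)
  apply (rule UnI1)
  apply (rule UnI1)
  apply (rule UnI2)
  by blast
lemma rel_gs: "e \<in> E1 \<Longrightarrow> fdiff (mono [Gh e, Vx (s e)]) (mono [Gh e]) \<in> lpa_relations E0 E1 r s"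
  unfolding lpa_relations_def
  apply (rule UnI1)
  apply (rule UnI1)
  apply (rule UnI2)
  by blast
lemma rel_rg: "e \<in> E1 \<Longrightarrow> fdiff (mono [Vx (r e), Gh e]) (mono [Gh e]) \<in> lpa_relations E0 E1 r s"
  unfolding lpa_relations_def
  apply (rule UnI1)
  apply (rule UnI2)
  by blast
lemma rel_ck: "v \<in> E0 \<Longrightarrow> {e\<in>E1. s e = v} \<noteq> {} \<Longrightarrow>
   fdiff (mono [Vx v]) (fsum (\<lambda>e. mono [Ed e, Gh e]) {e\<in>E1. s e = v}) \<in> lpa_relations E0 E1 r s"
  unfolding lpa_relations_def
  apply (rule UnI2)
  apply (rule CollectI)
  apply (rule exI[of _ v])
  using finE1 by simp


lemma gensD: "Vx v \<in> G \<Longrightarrow> v \<in> E0" "Ed e \<in> G \<Longrightarrow> e \<in> E1" "Gh e \<in> G \<Longrightarrow> e \<in> E1"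
  unfolding gens_def by auto

lemma gensI: "v \<in> E0 \<Longrightarrow> Vx v \<in> G" "e \<in> E1 \<Longrightarrow> Ed e \<in> G" "e \<in> E1 \<Longrightarrow> Gh e \<in> G"
  unfolding gens_def by auto

lemma edges_gens: "set es \<subseteq> E1 \<Longrightarrow> set (map Ed es) \<subseteq> G"
  unfolding gens_def by auto

abbreviation Z where "Z \<equiv> (\<lambda>_::('v,'e) gen list. 0::complex)"

lemma L1:
  assumes g: "g \<in> G" and q: "q \<in> paths E0 E1 r s" and c: "nghost [g] \<le> plen q \<or> sink (rend q)"
  shows "mono (g # cw q) \<approx> Z \<or> (\<exists>q'. q' \<in> paths E0 E1 r s \<and> rend q' = rend q \<and>
           plen q \<le> plen q' + nghost [g] \<and> mono (g # cw q) \<approx> mono (cw q'))"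
proof -
  obtain v es where qv: "q = (v, es)" by (cases q)
  have v: "v \<in> E0" and es: "set es \<subseteq> E1" and hd: "es \<noteq> [] \<Longrightarrow> s (hd es) = v"
    and ch: "edge_chain r s es" using q qv by (auto simp: paths_iff)
  show ?thesis
  proof (cases g)
    case (Vx w)
    have w: "w \<in> E0" using g Vx gensD by auto
    show ?thesis
    proof (cases es)
      case Nil
      show ?thesis
      proof (cases "w = v")
        case True
        have "mono [Vx v, Vx v] \<approx> mono [Vx v]" using eq_rel[OF rel_videm[OF v]] .
        then have "mono (g # cw q) \<approx> mono (cw q)" using Vx Nil True qv by (simp add: cw_def)
        then show ?thesis using q by (intro disjI2 exI[of _ q]) simp
      next
        case False
        have "mono [Vx w, Vx v] \<approx> Z" using eq_rel0[OF rel_vv[OF w v False]] .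
        then have "mono (g # cw q) \<approx> Z" using Vx Nil qv by (simp add: cw_def)
        then show ?thesis by (rule disjI1)
      qed
    next
      case (Cons e es')
      have e: "e \<in> E1" and sev: "s e = v" using es hd Cons by auto
      have b: "set (map Ed es') \<subseteq> G" using es Cons edges_gens by auto
      have cwq: "cw q = Ed e # map Ed es'" using qv Cons by (simp add: cw_def)
      show ?thesis
      proof (cases "w = v")
        case True
        have "mono ([] @ [Vx (s e), Ed e] @ map Ed es') \<approx> mono ([] @ [Ed e] @ map Ed es')"
          by (rule rw[OF rel_se[OF e] _ b]) simp
        then have "mono (g # cw q) \<approx> mono (cw q)" using Vx True sev cwq by simp
        then show ?thesis using q by (intro disjI2 exI[of _ q]) simp
      next
        case False
        have wG: "set [Vx w] \<subseteq> G" using w gensI by simp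
        have 1: "mono ([Vx w] @ [Vx (s e), Ed e] @ map Ed es') \<approx> mono ([Vx w] @ [Ed e] @ map Ed es')"
          by (rule rw[OF rel_se[OF e] wG b])
        have eG: "set (Ed e # map Ed es') \<subseteq> G" using b e gensI by simp
        have ne: "w \<noteq> s e" using False sev by simp
        have 2: "mono ([] @ [Vx w, Vx (s e)] @ (Ed e # map Ed es')) \<approx> Z"
          by (rule rw0[OF rel_vv[OF w sE0[OF e] ne] _ eG]) simp
        have h1: "mono (Vx w # Ed e # map Ed es') \<approx> mono (Vx w # Vx (s e) # Ed e # map Ed es')"
          using eq_sym[OF 1] by simp
        have h2: "mono (Vx w # Vx (s e) # Ed e # map Ed es') \<approx> Z" using 2 by simp
        have "mono (g # cw q) \<approx> Z" using eq_trans[OF h1 h2] Vx cwq by simp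
        then show ?thesis by (rule disjI1)
      qed
    qed
  next
    case (Ed e)
    have e: "e \<in> E1" using g Ed gensD by auto
    show ?thesis
    proof (cases es)
      case Nil
      show ?thesis
      proof (cases "v = r e")
        case True
        have 1: "mono [Ed e, Vx (r e)] \<approx> mono [Ed e]" using eq_rel[OF rel_er[OF e]] .
        have "(s e, [e]) \<in> paths E0 E1 r s" using e sE0 by (auto simp: paths_iff)
        moreover have "rend (s e, [e]) = rend q" using qv Nil True by (simp add: rend_def)
        ultimately show ?thesis using 1 Ed Nil True qv
          by (intro disjI2 exI[of _ "(s e, [e])"]) (auto simp: cw_def plen_def)
      next
        case False
        have 1: "mono ([] @ [Ed e, Vx (r e)] @ [Vx v]) \<approx> mono ([] @ [Ed e] @ [Vx v])"
          by (rule rw[OF rel_er[OF e]]) (use v gensI in auto)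
        have 2: "mono ([Ed e] @ [Vx (r e), Vx v] @ []) \<approx> Z"
          by (rule rw0[OF rel_vv[OF rE0[OF e] v]]) (use False e gensI in auto)
        have "mono [Ed e, Vx v] \<approx> Z" using eq_trans[OF eq_sym[OF 1]] 2 by simp
        then show ?thesis using Ed Nil qv by (auto simp: cw_def)
      qed
    next
      case (Cons f es')
      have f: "f \<in> E1" and sfv: "s f = v" using es hd Cons by auto
      have b: "set (map Ed es') \<subseteq> G" using es Cons edges_gens by auto
      show ?thesis
      proof (cases "r e = s f")
        case True
        let ?q = "(s e, e # f # es')"
        have "?q \<in> paths E0 E1 r s" using e sE0 es ch Cons True by (auto simp: paths_iff)
        moreover have "rend ?q = rend q" using qv Cons by (simp add: rend_def)
        moreover have "cw ?q = g # cw q" using Ed Cons qv by (simp add: cw_def)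
        ultimately show ?thesis using qv Cons
          by (intro disjI2 exI[of _ ?q]) (auto simp: plen_def eq_refl)
      next
        case False
        have 1: "mono ([] @ [Ed e, Vx (r e)] @ (Ed f # map Ed es')) \<approx> mono ([] @ [Ed e] @ (Ed f # map Ed es'))"
          by (rule rw[OF rel_er[OF e]]) (use b f gensI in auto)
        have 2: "mono ([Ed e, Vx (r e)] @ [Vx (s f), Ed f] @ map Ed es') \<approx> mono ([Ed e, Vx (r e)] @ [Ed f] @ map Ed es')"
          by (rule rw[OF rel_se[OF f]]) (use b e rE0 gensI in auto)
        have 3: "mono ([Ed e] @ [Vx (r e), Vx (s f)] @ (Ed f # map Ed es')) \<approx> Z"
          by (rule rw0[OF rel_vv[OF rE0[OF e] sE0[OF f] False]]) (use b e f gensI in auto)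
        have h1: "mono (Ed e # Ed f # map Ed es') \<approx> mono (Ed e # Vx (r e) # Ed f # map Ed es')"
          using eq_sym[OF 1] by simp
        have h2: "mono (Ed e # Vx (r e) # Ed f # map Ed es') \<approx> mono (Ed e # Vx (r e) # Vx (s f) # Ed f # map Ed es')"
          using eq_sym[OF 2] by simp
        have h3: "mono (Ed e # Vx (r e) # Vx (s f) # Ed f # map Ed es') \<approx> Z" using 3 by simp
        have "mono (Ed e # Ed f # map Ed es') \<approx> Z"
          using eq_trans[OF h1 eq_trans[OF h2 h3]] .
        then show ?thesis using Ed Cons qv by (auto simp: cw_def)
      qed
    qed
  next
    case (Gh e)
    have e: "e \<in> E1" using g Gh gensD by auto
    show ?thesis
    proof (cases es)
      case Nil
      have "sink v" using c Gh Nil qv by (auto simp: plen_def rend_def)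
      then have ne: "s e \<noteq> v" using e sink_def by auto
      have 1: "mono ([] @ [Gh e, Vx (s e)] @ [Vx v]) \<approx> mono ([] @ [Gh e] @ [Vx v])"
        by (rule rw[OF rel_gs[OF e]]) (use v gensI in auto)
      have 2: "mono ([Gh e] @ [Vx (s e), Vx v] @ []) \<approx> Z"
        by (rule rw0[OF rel_vv[OF sE0[OF e] v ne]]) (use e gensI in auto)
      have "mono [Gh e, Vx v] \<approx> Z" using eq_trans[OF eq_sym[OF 1]] 2 by simp
      then show ?thesis using Gh Nil qv by (auto simp: cw_def)
    next
      case (Cons f es')
      have f: "f \<in> E1" and sfv: "s f = v" using es hd Cons by auto
      have b: "set (map Ed es') \<subseteq> G" using es Cons edges_gens by auto
      show ?thesis
      proof (cases "f = e")
        case False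
        have "mono ([] @ [Gh e, Ed f] @ map Ed es') \<approx> Z"
          by (rule rw0[OF rel_ghe[OF e f]]) (use False b in auto)
        then show ?thesis using Gh Cons qv by (auto simp: cw_def)
      next
        case True
        have 1: "mono ([] @ [Gh e, Ed e] @ map Ed es') \<approx> mono ([] @ [Vx (r e)] @ map Ed es')"
          by (rule rw[OF rel_ee[OF e]]) (use b in auto)
        show ?thesis
        proof (cases es')
          case Nil
          have "(r e, []) \<in> paths E0 E1 r s" using rE0[OF e] by (auto simp: paths_iff)
          moreover have "rend (r e, []) = rend q" using qv Cons Nil True by (simp add: rend_def)
          ultimately show ?thesis using 1 Gh Cons Nil True qv
            by (intro disjI2 exI[of _ "(r e, [])"]) (auto simp: cw_def plen_def)
        next
          case (Cons f' es'')
          have ch2: "r e = s f'" "edge_chain r s es'" using ch `es = f # es'` Cons True edge_chain_Cons by auto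
          have f': "f' \<in> E1" using es `es = f # es'` Cons by auto
          have b2: "set (map Ed es'') \<subseteq> G" using es `es = f # es'` Cons edges_gens by auto
          have 2: "mono ([] @ [Vx (s f'), Ed f'] @ map Ed es'') \<approx> mono ([] @ [Ed f'] @ map Ed es'')"
            by (rule rw[OF rel_se[OF f']]) (use b2 in auto)
          let ?q = "(s f', es')"
          have "?q \<in> paths E0 E1 r s" using ch2 f' sE0 es `es = f # es'` Cons by (auto simp: paths_iff)
          moreover have "rend ?q = rend q" using qv `es = f # es'` Cons by (simp add: rend_def)
          moreover have "mono (g # cw q) \<approx> mono (cw ?q)"
            using eq_trans[OF 1] 2 Gh True qv `es = f # es'` Cons ch2 by (simp add: cw_def)
          ultimately show ?thesis using qv `es = f # es'`
            by (intro disjI2 exI[of _ ?q]) (auto simp: plen_def Gh)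
        qed
      qed
    qed
  qed
qed

end

lemma fsum_union: "finite A \<Longrightarrow> finite B \<Longrightarrow> A \<inter> B = {} \<Longrightarrow> fsum f (A \<union> B) = fadd (fsum f A) (fsum f B)"
  unfolding fsum_def fadd_def by (rule ext) (simp add: sum.union_disjoint)

lemma fsum_reindex: "inj_on h A \<Longrightarrow> fsum f (h ` A) = fsum (\<lambda>x. f (h x)) A"
  unfolding fsum_def by (rule ext) (simp add: sum.reindex)

lemma fsum_Sigma: "finite A \<Longrightarrow> (\<And>a. a \<in> A \<Longrightarrow> finite (B a)) \<Longrightarrow>
    fsum (\<lambda>x. f (fst x) (snd x)) (Sigma A B) = fsum (\<lambda>a. fsum (f a) (B a)) A"
  unfolding fsum_def by (rule ext) (simp add: sum.Sigma split_beta)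

lemma edge_chain_snoc: "edge_chain r s (es @ [e]) = (edge_chain r s es \<and> (es \<noteq> [] \<longrightarrow> r (last es) = s e))"
proof (induction es)
  case (Cons x es) then show ?case by (cases es) (auto simp: edge_chain_Cons)
qed simp

lemma fsum_delta: "a \<in> A \<Longrightarrow> finite A \<Longrightarrow> fsum (\<lambda>b. if b = a then t else (\<lambda>_. 0)) A = t"
proof
  fix w
  assume a: "a \<in> A" "finite A"
  have "fsum (\<lambda>b. if b = a then t else (\<lambda>_. 0)) A w = (\<Sum>b\<in>A. if b = a then t w else 0)"
    unfolding fsum_def by (rule sum.cong) auto
  then show "fsum (\<lambda>b. if b = a then t else (\<lambda>_. 0)) A w = t w" using a by (simp add: sum.delta)
qed

context lpa begin

lemma eq_fadd: "p \<approx> q \<Longrightarrow> p' \<approx> q' \<Longrightarrow> fadd p p' \<approx> fadd q q'"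
proof -
  assume "p \<approx> q" "p' \<approx> q'"
  then have "fadd (fdiff p q) (fdiff p' q') \<in> I" unfolding lpa_eq_def by (rule lpa_ideal.add)
  moreover have "fadd (fdiff p q) (fdiff p' q') = fdiff (fadd p p') (fadd q q')"
    unfolding fadd_def fdiff_def by auto
  ultimately show ?thesis unfolding lpa_eq_def by simp
qed

lemma L:
  "set w \<subseteq> G \<Longrightarrow> q \<in> paths E0 E1 r s \<Longrightarrow> nghost w \<le> plen q \<or> sink (rend q) \<Longrightarrow>
   mono (w @ cw q) \<approx> Z \<or> (\<exists>q'. q' \<in> paths E0 E1 r s \<and> rend q' = rend q \<and> mono (w @ cw q) \<approx> mono (cw q'))"
proof (induction w arbitrary: q rule: rev_induct)
  case Nil then show ?case by (intro disjI2 exI[of _ q]) (simp add: eq_refl)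
next
  case (snoc g w0)
  have g: "g \<in> G" and w0: "set w0 \<subseteq> G" using snoc.prems by auto
  have ng: "nghost (w0 @ [g]) = nghost w0 + nghost [g]" by (rule nghost_append)
  have c1: "nghost [g] \<le> plen q \<or> sink (rend q)" using snoc.prems(3) ng by auto
  have split: "mono ((w0 @ [g]) @ cw q) = fmult (mono w0) (mono (g # cw q))" by (simp add: mono_mult)
  from L1[OF g snoc.prems(2) c1] show ?case
  proof
    assume "mono (g # cw q) \<approx> Z"
    then have "fmult (mono w0) (mono (g # cw q)) \<approx> fmult (mono w0) Z"
      by (rule eq_lmult[OF good_mono[OF w0]])
    then show ?case using split by (simp add: fmult_zero_right)
  next
    assume "\<exists>q'. q' \<in> paths E0 E1 r s \<and> rend q' = rend q \<and>
           plen q \<le> plen q' + nghost [g] \<and> mono (g # cw q) \<approx> mono (cw q')"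
    then obtain q'' where q'': "q'' \<in> paths E0 E1 r s" "rend q'' = rend q" "plen q \<le> plen q'' + nghost [g]"
      "mono (g # cw q) \<approx> mono (cw q'')" by blast
    have e1: "mono ((w0 @ [g]) @ cw q) \<approx> mono (w0 @ cw q'')"
      using eq_lmult[OF good_mono[OF w0] q''(4)] split by (simp add: mono_mult)
    have c2: "nghost w0 \<le> plen q'' \<or> sink (rend q'')" using snoc.prems(3) ng q'' by auto
    from snoc.IH[OF w0 q''(1) c2] show ?case
    proof
      assume "mono (w0 @ cw q'') \<approx> Z" then show ?case using eq_trans[OF e1] by blast
    next
      assume "\<exists>q'. q' \<in> paths E0 E1 r s \<and> rend q' = rend q'' \<and> mono (w0 @ cw q'') \<approx> mono (cw q')"
      then show ?case using eq_trans[OF e1] q''(2) by metis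
    qed
  qed
qed

lemma fsum_single:
  assumes "finite A" "a \<in> A" "f a \<approx> t" "\<And>b. b \<in> A \<Longrightarrow> b \<noteq> a \<Longrightarrow> f b \<approx> Z"
  shows "fsum f A \<approx> t"
proof -
  have "fsum f A \<approx> fsum (\<lambda>b. if b = a then t else Z) A"
    by (rule eq_fsum[OF assms(1)]) (use assms in auto)
  moreover have "fsum (\<lambda>b. if b = a then t else Z) A = t" by (rule fsum_delta[OF assms(2,1)])
  ultimately show ?thesis by simp
qed

lemma unit_word:
  assumes w: "set w \<subseteq> G" "w \<noteq> []"
  shows "fmult (mono w) (lpa_one E0) \<approx> mono w"
proof -
  obtain w0 g where wg: "w = w0 @ [g]" using w(2) by (metis rev_exhaust)
  have g: "g \<in> G" and w0: "set w0 \<subseteq> G" using w wg by auto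
  have eq: "fmult (mono w) (lpa_one E0) = fsum (\<lambda>v. mono (w0 @ [g, Vx v])) E0"
    unfolding lpa_one_def fmult_fsum_right mono_mult wg by simp
  show ?thesis unfolding eq
  proof (cases g)
    case (Vx v0)
    have v0: "v0 \<in> E0" using g Vx gensD by auto
    show "fsum (\<lambda>v. mono (w0 @ [g, Vx v])) E0 \<approx> mono w"
    proof (rule fsum_single[OF finE0 v0])
      show "mono (w0 @ [g, Vx v0]) \<approx> mono w"
        using rw[OF rel_videm[OF v0] w0, of "[]"] Vx wg by simp
      fix b assume "b \<in> E0" "b \<noteq> v0"
      then show "mono (w0 @ [g, Vx b]) \<approx> Z"
        using rw0[OF rel_vv[OF v0, of b] w0, of "[]"] Vx by simp
    qed
  next
    case (Ed e)
    have e: "e \<in> E1" using g Ed gensD by auto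
    show "fsum (\<lambda>v. mono (w0 @ [g, Vx v])) E0 \<approx> mono w"
    proof (rule fsum_single[OF finE0 rE0[OF e]])
      show "mono (w0 @ [g, Vx (r e)]) \<approx> mono w"
        using rw[OF rel_er[OF e] w0, of "[]"] Ed wg by simp
      fix b assume b: "b \<in> E0" "b \<noteq> r e"
      have 1: "mono (w0 @ [Ed e, Vx (r e)] @ [Vx b]) \<approx> mono (w0 @ [Ed e] @ [Vx b])"
        by (rule rw[OF rel_er[OF e] w0]) (use b gensI in auto)
      have 2: "mono ((w0 @ [Ed e]) @ [Vx (r e), Vx b] @ []) \<approx> Z"
        by (rule rw0[OF rel_vv[OF rE0[OF e] b(1)]]) (use b w0 e gensI in auto)
      show "mono (w0 @ [g, Vx b]) \<approx> Z" using eq_trans[OF eq_sym[OF 1]] 2 Ed by simp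
    qed
  next
    case (Gh e)
    have e: "e \<in> E1" using g Gh gensD by auto
    show "fsum (\<lambda>v. mono (w0 @ [g, Vx v])) E0 \<approx> mono w"
    proof (rule fsum_single[OF finE0 sE0[OF e]])
      show "mono (w0 @ [g, Vx (s e)]) \<approx> mono w"
        using rw[OF rel_gs[OF e] w0, of "[]"] Gh wg by simp
      fix b assume b: "b \<in> E0" "b \<noteq> s e"
      have 1: "mono (w0 @ [Gh e, Vx (s e)] @ [Vx b]) \<approx> mono (w0 @ [Gh e] @ [Vx b])"
        by (rule rw[OF rel_gs[OF e] w0]) (use b gensI in auto)
      have 2: "mono ((w0 @ [Gh e]) @ [Vx (s e), Vx b] @ []) \<approx> Z"
        by (rule rw0[OF rel_vv[OF sE0[OF e] b(1)]]) (use b w0 e gensI in auto)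
      show "mono (w0 @ [g, Vx b]) \<approx> Z" using eq_trans[OF eq_sym[OF 1]] 2 Gh by simp
    qed
  qed
qed

lemma unit_right:
  assumes "good u" "u [] = 0"
  shows "fmult u (lpa_one E0) \<approx> u"
proof -
  have fin: "finite (fsupp u)" using assms unfolding good_def by auto
  have 1: "fmult u (lpa_one E0) = fsum (\<lambda>w. fsmult (u w) (fmult (mono w) (lpa_one E0))) (fsupp u)"
    by (rule fmult_expand_left[OF fin]) simp
  have 2: "fsum (\<lambda>w. fsmult (u w) (fmult (mono w) (lpa_one E0))) (fsupp u) \<approx> fsum (\<lambda>w. fsmult (u w) (mono w)) (fsupp u)"
  proof (rule eq_fsum[OF fin])
    fix w assume "w \<in> fsupp u"
    then have "u w \<noteq> 0" unfolding fsupp_def by simp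
    then have "set w \<subseteq> G" "w \<noteq> []" "u w \<in> R" using assms unfolding good_def by auto
    then show "fsmult (u w) (fmult (mono w) (lpa_one E0)) \<approx> fsmult (u w) (mono w)"
      by (intro eq_smult unit_word)
  qed
  have 3: "fsum (\<lambda>w. fsmult (u w) (mono w)) (fsupp u) = u" using expand[OF fin] by simp
  show ?thesis using 1 2 3 by simp
qed

end

context lpa begin

definition B :: "nat \<Rightarrow> ('v,'e) path set" where
  "B N = {q \<in> paths E0 E1 r s. plen q = N \<or> (plen q < N \<and> sink (rend q))}"

definition PP :: "('v,'e) path \<Rightarrow> ('v,'e) fa" where
  "PP q = fmult (path_elt q) (fstar (path_elt q))"

definition out :: "'v \<Rightarrow> 'e set" where "out v = {e \<in> E1. s e = v}"

definition ext :: "('v,'e) path \<Rightarrow> 'e \<Rightarrow> ('v,'e) path" where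
  "ext q e = (fst q, snd q @ [e])"

lemma PP_mono: "PP q = mono (cw q @ rev (map gstar (cw q)))"
  unfolding PP_def path_elt_cw fstar_mono mono_mult ..

lemma finite_B: "finite (B N)"
proof -
  have "B N \<subseteq> E0 \<times> {es. set es \<subseteq> E1 \<and> length es \<le> N}"
    unfolding B_def plen_def by (auto simp: paths_def)
  moreover have "finite (E0 \<times> {es. set es \<subseteq> E1 \<and> length es \<le> N})"
    using finE0 finE1 finite_lists_length_le by auto
  ultimately show ?thesis by (rule finite_subset)
qed

lemma B_paths: "q \<in> B N \<Longrightarrow> q \<in> paths E0 E1 r s" unfolding B_def by auto

lemma rend_E0: "q \<in> paths E0 E1 r s \<Longrightarrow> rend q \<in> E0"
  unfolding rend_def paths_def using rE0 by (auto split: prod.splits) (meson last_in_set subsetD)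

lemma ext_paths: "q \<in> paths E0 E1 r s \<Longrightarrow> e \<in> E1 \<Longrightarrow> s e = rend q \<Longrightarrow> ext q e \<in> paths E0 E1 r s"
  unfolding ext_def rend_def by (cases q) (auto simp: paths_iff edge_chain_snoc hd_append split: if_splits)

lemma ext_rend: "rend (ext q e) = r e" unfolding ext_def rend_def by simp

lemma finite_out: "finite (out v)" unfolding out_def using finE1 by simp

lemma localCK:
  assumes q: "q \<in> paths E0 E1 r s" and ns: "\<not> sink (rend q)"
  shows "PP q \<approx> fsum (\<lambda>e. PP (ext q e)) (out (rend q))"
proof -
  obtain v es where qv: "q = (v, es)" by (cases q)
  have v: "v \<in> E0" and es: "set es \<subseteq> E1" using q qv by (auto simp: paths_iff)
  let ?a = "map Ed es" and ?b = "rev (map Gh es)" and ?u = "rend q"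
  have a: "set ?a \<subseteq> G" and b: "set ?b \<subseteq> G" using es gensI by auto
  have u: "?u \<in> E0" using rend_E0[OF q] .
  have ne: "{e \<in> E1. s e = ?u} \<noteq> {}" using ns unfolding sink_def by auto
  have 1: "PP q \<approx> mono (?a @ [Vx ?u] @ ?b)"
  proof (cases es rule: rev_cases)
    case Nil
    then show ?thesis using qv eq_rel[OF rel_videm[OF v]] by (simp add: PP_mono cw_def rend_def)
  next
    case (snoc es0 el)
    have el: "el \<in> E1" using es snoc by auto
    have "mono (map Ed es0 @ [Ed el, Vx (r el)] @ (Gh el # rev (map Gh es0))) \<approx>
          mono (map Ed es0 @ [Ed el] @ (Gh el # rev (map Gh es0)))"
      by (rule rw[OF rel_er[OF el]]) (use es snoc gensI in auto)
    then have "mono (map Ed es0 @ [Ed el] @ (Gh el # rev (map Gh es0))) \<approx>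
          mono (map Ed es0 @ [Ed el, Vx (r el)] @ (Gh el # rev (map Gh es0)))" by (rule eq_sym)
    moreover have "map (gstar \<circ> Ed) xs = map Gh xs" for xs :: "'e list" by simp
    ultimately show ?thesis using qv snoc
      by (simp add: PP_mono cw_def rend_def rev_map)
  qed
  have 2: "fmult (mono ?a) (fmult (mono [Vx ?u]) (mono ?b)) \<approx>
           fmult (mono ?a) (fmult (fsum (\<lambda>e. mono [Ed e, Gh e]) {e \<in> E1. s e = ?u}) (mono ?b))"
    by (rule ctx[OF eq_rel[OF rel_ck[OF u ne]] a b])
  have 3: "fmult (mono ?a) (fmult (fsum (\<lambda>e. mono [Ed e, Gh e]) {e \<in> E1. s e = ?u}) (mono ?b))
      = fsum (\<lambda>e. PP (ext q e)) (out (rend q))"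
    unfolding fmult_fsum_left fmult_fsum_right mono_mult out_def
    by (rule fsum_cong) (simp add: PP_mono ext_def cw_def qv)
  show ?thesis using eq_trans[OF 1] 2 3 by (simp add: mono_mult)
qed

lemma eq_fsum_trans: "a \<approx> b \<Longrightarrow> b = c \<Longrightarrow> a \<approx> c" by simp

lemma partition_one: "fsum PP (B N) \<approx> lpa_one E0"
proof (induction N)
  case 0
  have B0: "B 0 = (\<lambda>v. (v, [])) ` E0"
    unfolding B_def plen_def by (auto simp: paths_def)
  have "fsum PP (B 0) = fsum (\<lambda>v. PP (v, [])) E0"
    unfolding B0 by (rule fsum_reindex) (auto simp: inj_on_def)
  also have "\<dots> = fsum (\<lambda>v. mono [Vx v, Vx v]) E0" by (simp add: PP_mono cw_def)
  finally show ?case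
    unfolding lpa_one_def using eq_fsum[OF finE0, of "\<lambda>v. mono [Vx v, Vx v]" "\<lambda>v. mono [Vx v]"]
      eq_rel[OF rel_videm] by simp
next
  case (Suc N)
  define Bs where "Bs = {q \<in> B N. sink (rend q)}"
  define Bn where "Bn = {q \<in> B N. \<not> sink (rend q)}"
  define Sg where "Sg = Sigma Bn (\<lambda>q. out (rend q))"
  define X where "X = (\<lambda>x. ext (fst x) (snd x)) ` Sg"
  have finBs: "finite Bs" and finBn: "finite Bn" unfolding Bs_def Bn_def using finite_B by auto
  have finSg: "finite Sg" unfolding Sg_def using finBn finite_out by auto
  have BN: "B N = Bs \<union> Bn" "Bs \<inter> Bn = {}" unfolding Bs_def Bn_def by auto
  have Bnlen: "q \<in> Bn \<Longrightarrow> plen q = N" for q unfolding Bn_def B_def by auto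
  have BSuc: "B (Suc N) = Bs \<union> X"
  proof
    show "B (Suc N) \<subseteq> Bs \<union> X"
    proof
      fix q assume qB: "q \<in> B (Suc N)"
      obtain v es where qv: "q = (v, es)" by (cases q)
      have qp: "q \<in> paths E0 E1 r s" using qB B_paths by auto
      show "q \<in> Bs \<union> X"
      proof (cases "plen q = Suc N")
        case True
        then obtain es0 e where ese: "es = es0 @ [e]" using qv unfolding plen_def by (metis length_0_conv nat.distinct(1) rev_exhaust snd_conv)
        have e: "e \<in> E1" using qp qv ese by (auto simp: paths_iff)
        have q0: "(v, es0) \<in> paths E0 E1 r s"
          using qp qv ese by (auto simp: paths_iff edge_chain_snoc)
        have r0: "rend (v, es0) = s e"
          using qp qv ese by (auto simp: paths_iff edge_chain_snoc rend_def)
        have "(v, es0) \<in> Bn"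
          unfolding Bn_def B_def using q0 r0 e True qv ese by (auto simp: plen_def sink_def)
        moreover have "e \<in> out (rend (v, es0))" using r0 e by (simp add: out_def)
        ultimately have "((v, es0), e) \<in> Sg" unfolding Sg_def by auto
        moreover have "q = ext (v, es0) e" using qv ese by (simp add: ext_def)
        ultimately show ?thesis unfolding X_def by (auto intro: image_eqI[where x="((v, es0), e)"])
      next
        case False
        then have "q \<in> Bs" using qB unfolding B_def Bs_def by auto
        then show ?thesis by simp
      qed
    qed
  next
    show "Bs \<union> X \<subseteq> B (Suc N)"
    proof
      fix q assume "q \<in> Bs \<union> X"
      then show "q \<in> B (Suc N)"
      proof
        assume "q \<in> Bs" then show ?thesis unfolding Bs_def B_def by auto
      next
        assume "q \<in> X"
        then obtain q0 e where "q0 \<in> Bn" "e \<in> out (rend q0)" "q = ext q0 e"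
          unfolding X_def Sg_def by auto
        then show ?thesis unfolding B_def using ext_paths[of q0 e] Bnlen[of q0]
          by (auto simp: out_def plen_def ext_def Bn_def B_def)
      qed
    qed
  qed
  have disj: "Bs \<inter> X = {}"
  proof -
    have "q \<in> X \<Longrightarrow> plen q = Suc N" for q unfolding X_def Sg_def using Bnlen
      by (auto simp: ext_def plen_def)
    moreover have "q \<in> Bs \<Longrightarrow> plen q \<le> N" for q unfolding Bs_def B_def by auto
    ultimately show ?thesis by fastforce
  qed
  have inj: "inj_on (\<lambda>x. ext (fst x) (snd x)) Sg"
    unfolding inj_on_def ext_def by (auto simp: prod_eq_iff)
  have finX: "finite X" unfolding X_def using finSg by simp
  have "fsum PP (B (Suc N)) = fadd (fsum PP Bs) (fsum PP X)"
    unfolding BSuc by (rule fsum_union[OF finBs finX disj])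
  also have "fsum PP X = fsum (\<lambda>q. fsum (\<lambda>e. PP (ext q e)) (out (rend q))) Bn"
    unfolding X_def
    using fsum_reindex[OF inj, of PP] fsum_Sigma[OF finBn finite_out, of "\<lambda>q e. PP (ext q e)"]
    by (simp add: Sg_def)
  finally have 1: "fsum PP (B (Suc N)) = fadd (fsum PP Bs) (fsum (\<lambda>q. fsum (\<lambda>e. PP (ext q e)) (out (rend q))) Bn)" .
  have 2: "fsum PP (B N) = fadd (fsum PP Bs) (fsum PP Bn)"
    unfolding BN(1) by (rule fsum_union[OF finBs finBn BN(2)])
  have 3: "fsum PP Bn \<approx> fsum (\<lambda>q. fsum (\<lambda>e. PP (ext q e)) (out (rend q))) Bn"
    by (rule eq_fsum[OF finBn]) (rule localCK, auto simp: Bn_def B_def)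
  have "fsum PP (B N) \<approx> fsum PP (B (Suc N))"
    unfolding 1 2 by (rule eq_fadd[OF eq_refl 3])
  then show ?case using Suc.IH eq_trans eq_sym by blast
qed

end

type_synonym ('v,'e) st = "('v \<times> (nat \<Rightarrow> 'e option)) \<times> int"

definition ind :: "bool \<Rightarrow> complex" where "ind b = (if b then 1 else 0)"

lemma sum_group:
  fixes c :: "'w \<Rightarrow> complex" and F :: "'w \<Rightarrow> 't option" and h :: "'t \<Rightarrow> complex"
  assumes fin: "finite S"
  shows "(\<Sum>w\<in>S. c w * (case F w of None \<Rightarrow> 0 | Some t \<Rightarrow> h t)) =
         (\<Sum>t\<in>{t. \<exists>w\<in>S. F w = Some t}. h t * (\<Sum>w\<in>S. c w * ind (F w = Some t)))"
proof -
  let ?T = "{t. \<exists>w\<in>S. F w = Some t}"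
  have finT: "finite ?T"
  proof -
    have "?T \<subseteq> (\<lambda>w. the (F w)) ` S" by force
    then show ?thesis using fin finite_subset by blast
  qed
  have inner: "(\<Sum>t\<in>?T. h t * (c w * ind (F w = Some t))) = c w * (case F w of None \<Rightarrow> 0 | Some t \<Rightarrow> h t)"
    if "w \<in> S" for w
  proof (cases "F w")
    case None then show ?thesis by (simp add: ind_def)
  next
    case (Some t0)
    have "t0 \<in> ?T" using that Some by auto
    then have "(\<Sum>t\<in>?T. h t * (c w * ind (F w = Some t))) = (\<Sum>t\<in>?T. if t = t0 then h t0 * c w else 0)"
      by (intro sum.cong) (auto simp: Some ind_def)
    also have "\<dots> = h t0 * c w" using \<open>t0 \<in> ?T\<close> finT by (simp add: sum.delta)
    finally show ?thesis using Some by simp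
  qed
  have "(\<Sum>t\<in>?T. h t * (\<Sum>w\<in>S. c w * ind (F w = Some t))) = (\<Sum>w\<in>S. \<Sum>t\<in>?T. h t * (c w * ind (F w = Some t)))"
    by (simp add: sum_distrib_left sum.swap[of _ ?T])
  also have "\<dots> = (\<Sum>w\<in>S. c w * (case F w of None \<Rightarrow> 0 | Some t \<Rightarrow> h t))"
    by (rule sum.cong) (simp_all add: inner)
  finally show ?thesis by simp
qed

context lpa begin

definition act1 :: "('v,'e) gen \<Rightarrow> ('v,'e) st \<Rightarrow> ('v,'e) st option" where
  "act1 g z = (case g of
      Vx v \<Rightarrow> if fst (fst z) = v then Some z else None
    | Ed e \<Rightarrow> if fst (fst z) = r e then Some ((s e, case_nat (Some e) (snd (fst z))), snd z + 1) else None
    | Gh e \<Rightarrow> if snd (fst z) 0 = Some e then Some ((r e, snd (fst z) \<circ> Suc), snd z - 1) else None)"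

lemma act1_simps[simp]:
  "act1 (Vx v) ((w,f),n) = (if w = v then Some ((w,f),n) else None)"
  "act1 (Ed e) ((w,f),n) = (if w = r e then Some ((s e, case_nat (Some e) f), n + 1) else None)"
  "act1 (Gh e) ((w,f),n) = (if f 0 = Some e then Some ((r e, f \<circ> Suc), n - 1) else None)"
  unfolding act1_def by auto

fun act :: "('v,'e) gen list \<Rightarrow> ('v,'e) st \<Rightarrow> ('v,'e) st option" where
  "act [] z = Some z"
| "act (g # w) z = (case act w z of None \<Rightarrow> None | Some t \<Rightarrow> act1 g t)"

lemma act_append: "act (a @ b) z = (case act b z of None \<Rightarrow> None | Some t \<Rightarrow> act a t)"
  by (induction a) (auto split: option.splits)

definition valid :: "('v,'e) st \<Rightarrow> bool" where
  "valid z \<longleftrightarrow> (let v = fst (fst z); f = snd (fst z) in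
     v \<in> E0 \<and> (\<forall>i e. f i = Some e \<longrightarrow> e \<in> E1) \<and> (\<forall>e. f 0 = Some e \<longrightarrow> s e = v) \<and>
     (\<forall>i e e'. f i = Some e \<longrightarrow> f (Suc i) = Some e' \<longrightarrow> r e = s e') \<and>
     (f 0 = None \<longrightarrow> sink v) \<and> (\<forall>i e. f i = Some e \<longrightarrow> f (Suc i) = None \<longrightarrow> sink (r e)))"

lemma valid_simp: "valid ((v,f),n) \<longleftrightarrow>
     v \<in> E0 \<and> (\<forall>i e. f i = Some e \<longrightarrow> e \<in> E1) \<and> (\<forall>e. f 0 = Some e \<longrightarrow> s e = v) \<and>
     (\<forall>i e e'. f i = Some e \<longrightarrow> f (Suc i) = Some e' \<longrightarrow> r e = s e') \<and>
     (f 0 = None \<longrightarrow> sink v) \<and> (\<forall>i e. f i = Some e \<longrightarrow> f (Suc i) = None \<longrightarrow> sink (r e))"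
  unfolding valid_def by simp

lemma valid_act1: "g \<in> G \<Longrightarrow> valid z \<Longrightarrow> act1 g z = Some t \<Longrightarrow> valid t"
proof -
  assume g: "g \<in> G" and vz: "valid z" and a: "act1 g z = Some t"
  obtain v f n where z: "z = ((v,f),n)" by (cases z) auto
  have vs1: "v \<in> E0" and vs2: "\<And>i e. f i = Some e \<Longrightarrow> e \<in> E1"
    and vs3: "\<And>e. f 0 = Some e \<Longrightarrow> s e = v"
    and vs4: "\<And>i e e'. f i = Some e \<Longrightarrow> f (Suc i) = Some e' \<Longrightarrow> r e = s e'"
    and vs5: "f 0 = None \<Longrightarrow> sink v"
    and vs6: "\<And>i e. f i = Some e \<Longrightarrow> f (Suc i) = None \<Longrightarrow> sink (r e)"
    using vz unfolding z valid_simp by blast+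
  show "valid t"
  proof (cases g)
    case (Vx x) then show ?thesis using a vz z by (simp split: if_splits)
  next
    case (Ed e)
    have e: "e \<in> E1" using g Ed gensD by auto
    have t: "t = ((s e, case_nat (Some e) f), n + 1)" and v: "v = r e" using a Ed z by (simp_all split: if_splits)
    show ?thesis unfolding t valid_simp
      apply (intro conjI allI impI)
      subgoal using e sE0 by simp
      subgoal for i e' using vs2 e by (cases i) auto
      subgoal for e' by simp
      subgoal for i e1 e2 using vs3 vs4 v by (cases i) auto
      subgoal by simp
      subgoal for i e1 using vs5 vs6 v by (cases i) auto
      done
  next
    case (Gh e)
    have t: "t = ((r e, f \<circ> Suc), n - 1)" and f0: "f 0 = Some e" using a Gh z by (simp_all split: if_splits)
    have e: "e \<in> E1" using g Gh gensD by auto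
    show ?thesis unfolding t valid_simp
      apply (intro conjI allI impI)
      subgoal using e rE0 by simp
      subgoal for i e' using vs2 by simp
      subgoal for e' using vs4[of 0 e e'] f0 by simp
      subgoal for i e1 e2 using vs4 by simp
      subgoal using vs6[of 0 e] f0 by simp
      subgoal for i e1 using vs6 by simp
      done
  qed
qed

lemma valid_act: "set w \<subseteq> G \<Longrightarrow> valid z \<Longrightarrow> act w z = Some t \<Longrightarrow> valid t"
proof (induction w arbitrary: t)
  case Nil then show ?case by simp
next
  case (Cons g w)
  then obtain m where m: "act w z = Some m" "act1 g m = Some t" by (auto split: option.splits)
  have vm: "valid m" using Cons.IH m(1) Cons.prems by auto
  have "g \<in> G" using Cons.prems by simp
  then show ?case using valid_act1[OF _ vm m(2)] by simp
qed

definition M :: "('v,'e) fa \<Rightarrow> ('v,'e) st \<Rightarrow> ('v,'e) st \<Rightarrow> complex" where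
  "M p y z = (\<Sum>w\<in>fsupp p. p w * ind (act w z = Some y))"

lemma M_sup: "finite S \<Longrightarrow> fsupp p \<subseteq> S \<Longrightarrow> M p y z = (\<Sum>w\<in>S. p w * ind (act w z = Some y))"
  unfolding M_def by (rule sum.mono_neutral_left) (auto simp: fsupp_def)

lemma fsupp_fdiff: "fsupp (fdiff p q) \<subseteq> fsupp p \<union> fsupp q" unfolding fsupp_def fdiff_def by auto
lemma fsupp_fadd: "fsupp (fadd p q) \<subseteq> fsupp p \<union> fsupp q" unfolding fsupp_def fadd_def by auto
lemma fsupp_fsmult: "fsupp (fsmult c p) \<subseteq> fsupp p" unfolding fsupp_def fsmult_def by auto
lemma fsupp_fsum: "fsupp (fsum f A) \<subseteq> (\<Union>i\<in>A. fsupp (f i))"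
proof
  fix w assume "w \<in> fsupp (fsum f A)"
  then have "(\<Sum>i\<in>A. f i w) \<noteq> 0" unfolding fsupp_def fsum_def by simp
  then obtain i where "i \<in> A" "f i w \<noteq> 0" by (meson sum.not_neutral_contains_not_neutral)
  then show "w \<in> (\<Union>i\<in>A. fsupp (f i))" unfolding fsupp_def by blast
qed
lemma fsupp_mono: "fsupp (mono w) = {w}" unfolding fsupp_def mono_def by auto

lemma M_fdiff: "finite (fsupp p) \<Longrightarrow> finite (fsupp q) \<Longrightarrow> M (fdiff p q) y z = M p y z - M q y z"
  apply (subst (1 2 3) M_sup[where S="fsupp p \<union> fsupp q"])
  using fsupp_fdiff by (auto simp: fdiff_def sum_subtractf left_diff_distrib)

lemma M_fadd: "finite (fsupp p) \<Longrightarrow> finite (fsupp q) \<Longrightarrow> M (fadd p q) y z = M p y z + M q y z"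
  apply (subst (1 2 3) M_sup[where S="fsupp p \<union> fsupp q"])
  using fsupp_fadd by (auto simp: fadd_def sum.distrib distrib_right)

lemma M_fsmult: "finite (fsupp p) \<Longrightarrow> M (fsmult c p) y z = c * M p y z"
  apply (subst (1 2) M_sup[where S="fsupp p"])
  using fsupp_fsmult by (auto simp: fsmult_def sum_distrib_left mult.assoc)

lemma finite_fsupp_fsum: "finite A \<Longrightarrow> (\<And>i. i \<in> A \<Longrightarrow> finite (fsupp (f i))) \<Longrightarrow> finite (fsupp (fsum f A))"
  by (rule finite_subset[OF fsupp_fsum]) (rule finite_UN_I)

lemma M_fsum: "finite A \<Longrightarrow> (\<And>i. i \<in> A \<Longrightarrow> finite (fsupp (f i))) \<Longrightarrow> M (fsum f A) y z = (\<Sum>i\<in>A. M (f i) y z)"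
proof (induction A rule: finite_induct)
  case empty then show ?case by (simp add: M_def fsum_empty fsupp_def)
next
  case (insert x F)
  then show ?case by (simp add: fsum_insert M_fadd finite_fsupp_fsum)
qed

lemma M_mono: "M (mono w) y z = ind (act w z = Some y)"
  unfolding M_def fsupp_mono by (simp add: mono_def)

lemma M_zero: "M (\<lambda>_. 0) y z = 0" unfolding M_def fsupp_def by simp

lemma M_lmono:
  assumes "finite (fsupp p)"
  shows "M (fmult (mono v) p) y z = (\<Sum>w\<in>fsupp p. p w * ind (act (v @ w) z = Some y))"
proof -
  have sub: "fsupp (fmult (mono v) p) \<subseteq> (\<lambda>w. v @ w) ` fsupp p"
  proof
    fix w assume "w \<in> fsupp (fmult (mono v) p)"
    then have c: "take (length v) w = v" "p (drop (length v) w) \<noteq> 0"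
      unfolding fsupp_def fmult_mono_left by (simp_all split: if_splits)
    have "w = v @ drop (length v) w" using c(1) append_take_drop_id[of "length v" w] by simp
    moreover have "drop (length v) w \<in> fsupp p" using c(2) unfolding fsupp_def by simp
    ultimately show "w \<in> (\<lambda>w. v @ w) ` fsupp p" by (rule image_eqI)
  qed
  have "M (fmult (mono v) p) y z = (\<Sum>w\<in>(\<lambda>w. v @ w) ` fsupp p. fmult (mono v) p w * ind (act w z = Some y))"
    by (rule M_sup[OF _ sub]) (use assms in simp)
  also have "\<dots> = (\<Sum>w\<in>fsupp p. p w * ind (act (v @ w) z = Some y))"
    by (subst sum.reindex) (simp_all add: inj_on_def fmult_mono_left)
  finally show ?thesis .
qed

lemma M_rmono:
  assumes "finite (fsupp p)"
  shows "M (fmult p (mono v)) y z = (case act v z of None \<Rightarrow> 0 | Some t \<Rightarrow> M p y t)"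
proof -
  have sub: "fsupp (fmult p (mono v)) \<subseteq> (\<lambda>w. w @ v) ` fsupp p"
  proof
    fix w assume "w \<in> fsupp (fmult p (mono v))"
    then have c: "drop (length w - length v) w = v" "p (take (length w - length v) w) \<noteq> 0"
      unfolding fsupp_def fmult_mono_right by (simp_all split: if_splits)
    have "w = take (length w - length v) w @ v" using c(1) append_take_drop_id[of "length w - length v" w] by simp
    moreover have "take (length w - length v) w \<in> fsupp p" using c(2) unfolding fsupp_def by simp
    ultimately show "w \<in> (\<lambda>w. w @ v) ` fsupp p" by (rule image_eqI)
  qed
  have "M (fmult p (mono v)) y z = (\<Sum>w\<in>(\<lambda>w. w @ v) ` fsupp p. fmult p (mono v) w * ind (act w z = Some y))"
    by (rule M_sup[OF _ sub]) (use assms in simp)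
  also have "\<dots> = (\<Sum>w\<in>fsupp p. p w * ind (act (w @ v) z = Some y))"
    by (subst sum.reindex) (simp_all add: inj_on_def fmult_mono_right)
  also have "\<dots> = (case act v z of None \<Rightarrow> 0 | Some t \<Rightarrow> M p y t)"
  proof (cases "act v z")
    case None then show ?thesis by (simp add: act_append ind_def)
  next
    case (Some t) then show ?thesis by (simp add: act_append M_def)
  qed
  finally show ?thesis .
qed

end

lemma case_nat_comp_Suc[simp]: "case_nat a f \<circ> Suc = f" by (rule ext) simp

lemma case_nat_restore: "f 0 = Some e \<Longrightarrow> case_nat (Some e) (f \<circ> Suc) = f"
  by (rule ext) (simp split: nat.split)

context lpa begin

lemma fin_fdiff_mono[simp]: "finite (fsupp (fdiff (mono a) (mono b)))"
  by (rule finite_subset[OF fsupp_fdiff]) (simp add: fsupp_mono)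

lemma fsupp_lmono: "fsupp (fmult (mono v) p) \<subseteq> (\<lambda>w. v @ w) ` fsupp p"
proof
  fix w assume "w \<in> fsupp (fmult (mono v) p)"
  then have c: "take (length v) w = v" "p (drop (length v) w) \<noteq> 0"
    unfolding fsupp_def fmult_mono_left by (simp_all split: if_splits)
  have "w = v @ drop (length v) w" using c(1) append_take_drop_id[of "length v" w] by simp
  moreover have "drop (length v) w \<in> fsupp p" using c(2) unfolding fsupp_def by simp
  ultimately show "w \<in> (\<lambda>w. v @ w) ` fsupp p" by (rule image_eqI)
qed

lemma fsupp_rmono: "fsupp (fmult p (mono v)) \<subseteq> (\<lambda>w. w @ v) ` fsupp p"
proof
  fix w assume "w \<in> fsupp (fmult p (mono v))"
  then have c: "drop (length w - length v) w = v" "p (take (length w - length v) w) \<noteq> 0"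
    unfolding fsupp_def fmult_mono_right by (simp_all split: if_splits)
  have "w = take (length w - length v) w @ v" using c(1) append_take_drop_id[of "length w - length v" w] by simp
  moreover have "take (length w - length v) w \<in> fsupp p" using c(2) unfolding fsupp_def by simp
  ultimately show "w \<in> (\<lambda>w. w @ v) ` fsupp p" by (rule image_eqI)
qed

lemma M_ck:
  assumes v: "v \<in> E0" and ne: "{e\<in>E1. s e = v} \<noteq> {}" and vz: "valid z"
  shows "M (fdiff (mono [Vx v]) (fsum (\<lambda>e. mono [Ed e, Gh e]) {e\<in>E1. s e = v})) y z = 0"
proof -
  let ?A = "{e\<in>E1. s e = v}"
  have finA: "finite ?A" using finE1 by simp
  obtain u f n where z: "z = ((u,f),n)" by (cases z) auto
  have vs: "u \<in> E0" "\<And>i e. f i = Some e \<Longrightarrow> e \<in> E1" "\<And>e. f 0 = Some e \<Longrightarrow> s e = u"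
    "f 0 = None \<Longrightarrow> sink u" using vz z by (auto simp: valid_simp)
  have a2: "act [Ed e, Gh e] z = (if f 0 = Some e then Some z else None)" for e
    using z vs(3) case_nat_restore[of f e] by auto
  have "M (fsum (\<lambda>e. mono [Ed e, Gh e]) ?A) y z = (\<Sum>e\<in>?A. M (mono [Ed e, Gh e]) y z)"
    by (rule M_fsum[OF finA]) (simp add: fsupp_mono)
  also have "\<dots> = (\<Sum>e\<in>?A. ind (f 0 = Some e \<and> y = z))"
    by (rule sum.cong[OF refl]) (simp only: M_mono a2, auto simp: ind_def)
  also have "\<dots> = ind (u = v \<and> y = z)"
  proof (cases "f 0")
    case None
    then have "u \<noteq> v" using vs(4) ne sink_def by auto
    then show ?thesis using None by (simp add: ind_def)
  next
    case (Some e0)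
    have "e0 \<in> E1" "s e0 = u" using vs Some by auto
    then have "(\<Sum>e\<in>?A. ind (f 0 = Some e \<and> y = z)) = (\<Sum>e\<in>?A. if e = e0 then ind (y = z) else 0)"
      using Some by (intro sum.cong) (auto simp: ind_def)
    also have "\<dots> = ind (u = v \<and> y = z)" using finA \<open>e0 \<in> E1\<close> \<open>s e0 = u\<close> by (auto simp: sum.delta ind_def)
    finally show ?thesis .
  qed
  finally have 1: "M (fsum (\<lambda>e. mono [Ed e, Gh e]) ?A) y z = ind (u = v \<and> y = z)" .
  have 2: "M (mono [Vx v]) y z = ind (u = v \<and> y = z)" using z by (auto simp: M_mono ind_def)
  have fin: "finite (fsupp (fsum (\<lambda>e. mono [Ed e, Gh e]) ?A))"
    using finA by (intro finite_fsupp_fsum) (auto simp: fsupp_mono)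
  have "M (fdiff (mono [Vx v]) (fsum (\<lambda>e. mono [Ed e, Gh e]) ?A)) y z = M (mono [Vx v]) y z - M (fsum (\<lambda>e. mono [Ed e, Gh e]) ?A) y z"
    by (rule M_fdiff) (simp_all add: fsupp_mono fin)
  then show ?thesis using 1 2 by simp
qed

lemma rel_M: "g \<in> lpa_relations E0 E1 r s \<Longrightarrow> finite (fsupp g) \<and> (\<forall>y z. valid z \<longrightarrow> M g y z = 0)"
  unfolding lpa_relations_def Un_iff mem_Collect_eq
  apply (elim disjE exE conjE)
  subgoal for v w by (simp add: fsupp_mono M_mono ind_def split: prod.splits)
  subgoal for v using fsupp_fdiff[of "mono [Vx v, Vx v]" "mono [Vx v]"]
    by (simp add: fsupp_mono M_mono M_fdiff ind_def finite_subset split: prod.splits)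
  subgoal for e f by (simp add: fsupp_mono M_mono ind_def split: prod.splits)
  subgoal for e using fsupp_fdiff[of "mono [Gh e, Ed e]" "mono [Vx (r e)]"]
    by (simp add: fsupp_mono M_mono M_fdiff ind_def finite_subset split: prod.splits)
  subgoal for e using fsupp_fdiff[of "mono [Vx (s e), Ed e]" "mono [Ed e]"]
    by (simp add: fsupp_mono M_mono M_fdiff ind_def finite_subset split: prod.splits)
  subgoal for e using fsupp_fdiff[of "mono [Ed e, Vx (r e)]" "mono [Ed e]"]
    by (simp add: fsupp_mono M_mono M_fdiff ind_def finite_subset split: prod.splits)
  subgoal for e using fsupp_fdiff[of "mono [Gh e, Vx (s e)]" "mono [Gh e]"]
    by (auto simp: fsupp_mono M_mono M_fdiff ind_def valid_simp finite_subset split: prod.splits)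
  subgoal for e using fsupp_fdiff[of "mono [Vx (r e), Gh e]" "mono [Gh e]"]
    by (simp add: fsupp_mono M_mono M_fdiff ind_def finite_subset split: prod.splits)
  subgoal for v
  proof -
    assume g: "g = fdiff (mono [Vx v]) (fsum (\<lambda>e. mono [Ed e, Gh e]) {e \<in> E1. s e = v})"
      and v: "v \<in> E0" and fin: "finite {e \<in> E1. s e = v}" and ne: "{e \<in> E1. s e = v} \<noteq> {}"
    have f1: "finite (fsupp (fsum (\<lambda>e. mono [Ed e, Gh e]) {e \<in> E1. s e = v}))"
      using finE1 by (intro finite_fsupp_fsum) (auto simp: fsupp_mono)
    have "finite (fsupp g)" unfolding g
      by (rule finite_subset[OF fsupp_fdiff]) (simp add: fsupp_mono f1)
    then show ?thesis using g M_ck[OF v ne] by auto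
  qed
  done

lemma I_M: "p \<in> I \<Longrightarrow> finite (fsupp p) \<and> (\<forall>y z. valid z \<longrightarrow> M p y z = 0)"
proof (induction rule: lpa_ideal.induct)
  case zero then show ?case by (simp add: M_zero fsupp_def)
next
  case (rel g) then show ?case by (rule rel_M)
next
  case (add p q)
  then show ?case using fsupp_fadd[of p q] by (auto simp: M_fadd intro: finite_subset)
next
  case (smult c p)
  then show ?case using fsupp_fsmult[of c p] by (auto simp: M_fsmult intro: finite_subset)
next
  case (lmult x p)
  have fin: "finite (fsupp (fmult (mono [x]) p))"
    using lmult fsupp_lmono[of "[x]" p] by (auto intro: finite_subset)
  have "M (fmult (mono [x]) p) y z = 0" if vz: "valid z" for y z
  proof -
    have "M (fmult (mono [x]) p) y z = (\<Sum>w\<in>fsupp p. p w * (case act w z of None \<Rightarrow> 0 | Some t \<Rightarrow> ind (act1 x t = Some y)))"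
      using lmult by (subst M_lmono) (auto intro!: sum.cong simp: ind_def split: option.splits)
    also have "\<dots> = (\<Sum>t\<in>{t. \<exists>w\<in>fsupp p. act w z = Some t}. ind (act1 x t = Some y) * M p t z)"
      using lmult by (subst sum_group) (auto simp: M_def)
    also have "\<dots> = 0"
    proof -
      have h: "M p t z = 0" for t using lmult.IH vz by blast
      show ?thesis by (simp add: h)
    qed
    finally show ?thesis .
  qed
  then show ?case using fin by auto
next
  case (rmult x p)
  have fin: "finite (fsupp (fmult p (mono [x])))"
    using rmult fsupp_rmono[of p "[x]"] by (auto intro: finite_subset)
  have "M (fmult p (mono [x])) y z = 0" if vz: "valid z" for y z
  proof -
    have e: "M (fmult p (mono [x])) y z = (case act1 x z of None \<Rightarrow> 0 | Some t \<Rightarrow> M p y t)"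
      using M_rmono[of p "[x]"] rmult by simp
    show ?thesis
    proof (cases "act1 x z")
      case None then show ?thesis using e by simp
    next
      case (Some t)
      have "valid t" using valid_act1[OF rmult(1) vz Some] .
      then have "M p y t = 0" using rmult.IH by blast
      then show ?thesis using e Some by simp
    qed
  qed
  then show ?case using fin by auto
qed

lemma M_eq: "finite (fsupp p) \<Longrightarrow> finite (fsupp q) \<Longrightarrow> p \<approx> q \<Longrightarrow> valid z \<Longrightarrow> M p y z = M q y z"
proof -
  assume a: "finite (fsupp p)" "finite (fsupp q)" "p \<approx> q" "valid z"
  have "M (fdiff p q) y z = 0" using I_M a(3,4) unfolding lpa_eq_def by blast
  then show ?thesis using M_fdiff[OF a(1,2)] by simp
qed

end

lemma cnj_ind[simp]: "cnj (ind b) = ind b" by (simp add: ind_def)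

lemma ind_mult: "ind a * ind b = ind (a \<and> b)" by (simp add: ind_def)

context lpa begin

lemma act1_inv:
  assumes g: "g \<in> G" and vz: "valid z" and vt: "valid t"
  shows "(act1 (gstar g) t = Some z) = (act1 g z = Some t)"
proof -
  obtain u f n where z: "z = ((u,f),n)" by (cases z) auto
  obtain u' f' n' where t: "t = ((u',f'),n')" by (cases t) auto
  show ?thesis
  proof (cases g)
    case (Vx v) then show ?thesis using z t by auto
  next
    case (Ed e)
    have "s e = u'" if "f' 0 = Some e" using vt t that by (auto simp: valid_simp)
    then show ?thesis using z t Ed case_nat_restore[of f' e] by auto
  next
    case (Gh e)
    have "s e = u" if "f 0 = Some e" using vz z that by (auto simp: valid_simp)
    then show ?thesis using z t Gh case_nat_restore[of f e] by auto
  qed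
qed

lemma act_inv:
  "set w \<subseteq> G \<Longrightarrow> valid z \<Longrightarrow> valid t \<Longrightarrow> (act (rev (map gstar w)) t = Some z) = (act w z = Some t)"
proof (induction w arbitrary: t)
  case Nil then show ?case by auto
next
  case (Cons g w)
  have g: "g \<in> G" and w: "set w \<subseteq> G" using Cons.prems by auto
  have gs: "gstar g \<in> G" using g gstar_in_gens by auto
  have lhs: "act (rev (map gstar (g # w))) t = (case act1 (gstar g) t of None \<Rightarrow> None | Some m \<Rightarrow> act (rev (map gstar w)) m)"
    by (simp add: act_append)
  show ?case
  proof
    assume a: "act (rev (map gstar (g # w))) t = Some z"
    then obtain m where m: "act1 (gstar g) t = Some m" "act (rev (map gstar w)) m = Some z"
      unfolding lhs by (auto split: option.splits)
    have vm: "valid m" using valid_act1[OF gs Cons.prems(3) m(1)] .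
    have "act w z = Some m" using Cons.IH[OF w Cons.prems(2) vm] m(2) by simp
    moreover have "act1 g m = Some t" using act1_inv[OF g vm Cons.prems(3)] m(1) by simp
    ultimately show "act (g # w) z = Some t" by simp
  next
    assume a: "act (g # w) z = Some t"
    then obtain m where m: "act w z = Some m" "act1 g m = Some t" by (auto split: option.splits)
    have vm: "valid m" using valid_act[OF w Cons.prems(2) m(1)] .
    have "act (rev (map gstar w)) m = Some z" using Cons.IH[OF w Cons.prems(2) vm] m(1) by simp
    moreover have "act1 (gstar g) t = Some m" using act1_inv[OF g vm Cons.prems(3)] m(2) by simp
    ultimately show "act (rev (map gstar (g # w))) t = Some z" unfolding lhs by simp
  qed
qed

lemma M_one: "valid z \<Longrightarrow> M (lpa_one E0) y z = ind (y = z)"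
proof -
  assume vz: "valid z"
  obtain u f n where z: "z = ((u,f),n)" by (cases z) auto
  have u: "u \<in> E0" using vz z by (simp add: valid_simp)
  have "M (lpa_one E0) y z = (\<Sum>v\<in>E0. M (mono [Vx v]) y z)"
    unfolding lpa_one_def by (rule M_fsum[OF finE0]) (simp add: fsupp_mono)
  also have "\<dots> = (\<Sum>v\<in>E0. if v = u then ind (y = z) else 0)"
    by (rule sum.cong[OF refl]) (simp add: M_mono z ind_def)
  also have "\<dots> = ind (y = z)" using u finE0 by (simp add: sum.delta)
  finally show ?thesis .
qed

lemma norm1:
  assumes gu: "good u" and vz: "valid z"
  shows "M (fmult (fstar u) u) z z =
     (\<Sum>t\<in>{t. \<exists>w\<in>fsupp u. act w z = Some t}. cnj (M u t z) * M u t z)"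
proof -
  define S where "S = fsupp u"
  define T where "T = {t. \<exists>w\<in>S. act w z = Some t}"
  define st where "st = (\<lambda>w::('v,'e) gen list. rev (map gstar w))"
  have finS: "finite S" using gu unfolding good_def S_def by simp
  have finT: "finite T"
  proof -
    have "T \<subseteq> (\<lambda>w. the (act w z)) ` S" unfolding T_def by force
    then show ?thesis using finS finite_subset by blast
  qed
  have SG: "w \<in> S \<Longrightarrow> set w \<subseteq> G" for w using gu unfolding good_def S_def fsupp_def by auto
  have injst: "inj_on st S" unfolding st_def inj_on_def by (metis rev_star_star)
  have sst: "fsupp (fstar u) = st ` S" unfolding S_def st_def by (rule fsupp_fstar)
  have "fmult (fstar u) u = fsum (\<lambda>v. fsmult (fstar u v) (fmult (mono v) u)) (st ` S)"
    by (rule fmult_expand_left) (use finS sst in auto)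
  moreover have finfs: "finite (fsupp (fmult (mono v) u))" for v
    by (rule finite_subset[OF fsupp_lmono]) (use finS in \<open>simp add: S_def\<close>)
  moreover have "M (fsum (\<lambda>v. fsmult (fstar u v) (fmult (mono v) u)) (st ` S)) z z
      = (\<Sum>v\<in>st ` S. M (fsmult (fstar u v) (fmult (mono v) u)) z z)"
    by (rule M_fsum) (use finS finite_subset[OF fsupp_fsmult finfs] in auto)
  ultimately have "M (fmult (fstar u) u) z z = (\<Sum>v\<in>st ` S. fstar u v * M (fmult (mono v) u) z z)"
    by (simp add: M_fsmult)
  also have "\<dots> = (\<Sum>v'\<in>S. cnj (u v') * (\<Sum>w\<in>S. u w * ind (act (st v' @ w) z = Some z)))"
    by (subst sum.reindex[OF injst]) (simp add: M_lmono finS[unfolded S_def] S_def st_def fstar_def)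
  also have "\<dots> = (\<Sum>v'\<in>S. cnj (u v') * (\<Sum>w\<in>S. u w * ind (\<exists>t. act w z = Some t \<and> act v' z = Some t)))"
  proof (intro sum.cong refl arg_cong2[where f="(*)"])
    fix v' w assume v': "v' \<in> S" and w: "w \<in> S"
    have "(act (st v' @ w) z = Some z) = (\<exists>t. act w z = Some t \<and> act v' z = Some t)"
    proof (cases "act w z")
      case None then show ?thesis by (simp add: act_append)
    next
      case (Some t)
      have vt: "valid t" using valid_act[OF SG[OF w] vz Some] .
      show ?thesis using act_inv[OF SG[OF v'] vz vt] Some by (simp add: act_append st_def)
    qed
    then show "ind (act (st v' @ w) z = Some z) = ind (\<exists>t. act w z = Some t \<and> act v' z = Some t)" by simp
  qed
  also have "\<dots> = (\<Sum>t\<in>T. cnj (M u t z) * M u t z)"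
  proof -
    have inner: "(\<Sum>t\<in>T. ind (act v' z = Some t) * ind (act w z = Some t)) = ind (\<exists>t. act w z = Some t \<and> act v' z = Some t)"
      if w: "w \<in> S" for v' w
    proof (cases "act w z")
      case None then show ?thesis by (simp add: ind_def)
    next
      case (Some t0)
      have "t0 \<in> T" using w Some unfolding T_def by auto
      have "(\<Sum>t\<in>T. ind (act v' z = Some t) * ind (act w z = Some t)) = (\<Sum>t\<in>T. if t = t0 then ind (act v' z = Some t0) else 0)"
        by (rule sum.cong) (auto simp: Some ind_def)
      also have "\<dots> = ind (act v' z = Some t0)" using \<open>t0 \<in> T\<close> finT by (simp add: sum.delta)
      finally show ?thesis using Some by (simp add: ind_def)
    qed
    have "(\<Sum>t\<in>T. cnj (M u t z) * M u t z) =
       (\<Sum>t\<in>T. \<Sum>v'\<in>S. \<Sum>w\<in>S. cnj (u v') * u w * (ind (act v' z = Some t) * ind (act w z = Some t)))"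
      unfolding M_def S_def[symmetric]
      by (simp add: sum_distrib_left sum_distrib_right mult_ac)
    also have "\<dots> = (\<Sum>v'\<in>S. \<Sum>w\<in>S. \<Sum>t\<in>T. cnj (u v') * u w * (ind (act v' z = Some t) * ind (act w z = Some t)))"
      by (simp add: sum.swap[of _ T])
    also have "\<dots> = (\<Sum>v'\<in>S. \<Sum>w\<in>S. cnj (u v') * u w * ind (\<exists>t. act w z = Some t \<and> act v' z = Some t))"
      by (intro sum.cong refl) (simp add: sum_distrib_left[symmetric] inner)
    also have "\<dots> = (\<Sum>v'\<in>S. cnj (u v') * (\<Sum>w\<in>S. u w * ind (\<exists>t. act w z = Some t \<and> act v' z = Some t)))"
      by (simp add: sum_distrib_left mult_ac)
    finally show ?thesis by simp
  qed
  finally show ?thesis unfolding T_def S_def .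
qed

lemma norm_eq1:
  assumes gu: "good u" and un: "fmult (fstar u) u \<approx> lpa_one E0" and vz: "valid z"
  shows "(\<Sum>t\<in>{t. \<exists>w\<in>fsupp u. act w z = Some t}. (cmod (M u t z))\<^sup>2) = 1"
proof -
  have g1: "good (fmult (fstar u) u)" using gu by (simp add: good_fmult good_fstar)
  have f1: "finite (fsupp (fmult (fstar u) u))" using g1 unfolding good_def by simp
  have f2: "finite (fsupp (lpa_one E0 :: ('v,'e) fa))" using good_lpa_one unfolding good_def by simp
  have "M (fmult (fstar u) u) z z = M (lpa_one E0) z z" by (rule M_eq[OF f1 f2 un vz])
  also have "\<dots> = 1" using M_one[OF vz] by (simp add: ind_def)
  finally have "(\<Sum>t\<in>{t. \<exists>w\<in>fsupp u. act w z = Some t}. cnj (M u t z) * M u t z) = 1"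
    using norm1[OF gu vz] by simp
  moreover have "(\<Sum>t\<in>{t. \<exists>w\<in>fsupp u. act w z = Some t}. cnj (M u t z) * M u t z) =
      complex_of_real (\<Sum>t\<in>{t. \<exists>w\<in>fsupp u. act w z = Some t}. (cmod (M u t z))\<^sup>2)"
    unfolding of_real_sum by (rule sum.cong[OF refl]) (metis complex_norm_square mult.commute)
  ultimately have "complex_of_real (\<Sum>t\<in>{t. \<exists>w\<in>fsupp u. act w z = Some t}. (cmod (M u t z))\<^sup>2) = 1"
    by simp
  then show ?thesis by (simp only: of_real_eq_1_iff)
qed

end

lemma nghost_le: "nghost w \<le> length w"
proof (induction w)
  case (Cons g w) then show ?case by (cases g) auto
qed simp

definition pre :: "'e list \<Rightarrow> (nat \<Rightarrow> 'e option) \<Rightarrow> nat \<Rightarrow> 'e option" where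
  "pre es f = (\<lambda>i. if i < length es then Some (es ! i) else f (i - length es))"

lemma pre_Cons: "pre (e # es) f = case_nat (Some e) (pre es f)"
  unfolding pre_def by (rule ext) (auto split: nat.split)

lemma pre_Nil: "pre [] f = f" unfolding pre_def by simp

context lpa begin

definition tg :: "('v,'e) path \<Rightarrow> ('v,'e) st \<Rightarrow> ('v,'e) st" where
  "tg p z = ((fst p, pre (snd p) (snd (fst z))), snd z + int (length (snd p)))"

lemma act_edges:
  "edge_chain r s es \<Longrightarrow> es \<noteq> [] \<Longrightarrow> r (last es) = fst (fst z) \<Longrightarrow>
   act (map Ed es) z = Some ((s (hd es), pre es (snd (fst z))), snd z + int (length es))"
proof (induction es)
  case Nil then show ?case by simp
next
  case (Cons e es)
  obtain w f n where z: "z = ((w,f),n)" by (cases z) auto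
  show ?case
  proof (cases "es = []")
    case True
    then show ?thesis using Cons.prems z by (simp add: pre_Cons pre_Nil)
  next
    case False
    have ch: "edge_chain r s es" "r e = s (hd es)" using Cons.prems(1) False by (simp_all add: edge_chain_Cons)
    have "r (last es) = fst (fst z)" using Cons.prems(3) False by simp
    then have "act (map Ed es) z = Some ((s (hd es), pre es f), n + int (length es))"
      using Cons.IH[OF ch(1) False] z by simp
    then show ?thesis using ch(2) z by (simp add: pre_Cons add.assoc)
  qed
qed

lemma act_path: "p \<in> paths E0 E1 r s \<Longrightarrow> rend p = fst (fst z) \<Longrightarrow> act (cw p) z = Some (tg p z)"
proof -
  assume p: "p \<in> paths E0 E1 r s" and e: "rend p = fst (fst z)"
  obtain v es where pv: "p = (v, es)" by (cases p)
  obtain w f n where z: "z = ((w,f),n)" by (cases z) auto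
  show ?thesis
  proof (cases "es = []")
    case True then show ?thesis using e pv z by (simp add: cw_def rend_def tg_def pre_Nil)
  next
    case False
    have "edge_chain r s es" "s (hd es) = v" using p pv False by (auto simp: paths_iff)
    then show ?thesis using act_edges[of es z] e pv z False by (simp add: cw_def rend_def tg_def)
  qed
qed

lemma tg_inj:
  assumes "p \<in> paths E0 E1 r s" "p' \<in> paths E0 E1 r s" "tg p z = tg p' z"
  shows "p = p'"
proof -
  obtain v es where pv: "p = (v, es)" by (cases p)
  obtain v' es' where pv': "p' = (v', es')" by (cases p')
  have v: "v = v'" and l: "length es = length es'" and pe: "pre es (snd (fst z)) = pre es' (snd (fst z))"
    using assms(3) pv pv' by (auto simp: tg_def)
  have "es = es'"
  proof (rule nth_equalityI[OF l])
    fix i assume "i < length es"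
    then have "pre es (snd (fst z)) i = Some (es ! i)" "pre es' (snd (fst z)) i = Some (es' ! i)"
      using l by (auto simp: pre_def)
    then show "es ! i = es' ! i" using pe by simp
  qed
  then show ?thesis using v pv pv' by simp
qed

definition nxt :: "'v \<Rightarrow> 'e option" where
  "nxt x = (if \<exists>e\<in>E1. s e = x then Some (SOME e. e \<in> E1 \<and> s e = x) else None)"

primrec cur :: "'v \<Rightarrow> nat \<Rightarrow> 'v" where
  "cur v 0 = v"
| "cur v (Suc i) = (case nxt (cur v i) of None \<Rightarrow> cur v i | Some e \<Rightarrow> r e)"

lemma nxt_Some: "nxt x = Some e \<Longrightarrow> e \<in> E1 \<and> s e = x"
  unfolding nxt_def by (auto split: if_splits intro: someI2_ex)

lemma nxt_None: "nxt x = None \<Longrightarrow> sink x"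
  unfolding nxt_def sink_def by (auto split: if_splits)

lemma valid_exists: "v \<in> E0 \<Longrightarrow> valid ((v, \<lambda>i. nxt (cur v i)), 0)"
  unfolding valid_simp
proof (intro conjI allI impI)
  fix i e assume "nxt (cur v i) = Some e" then show "e \<in> E1" using nxt_Some by blast
next
  fix e assume "nxt (cur v 0) = Some e" then show "s e = v" using nxt_Some by auto
next
  fix i e e' assume a: "nxt (cur v i) = Some e" "nxt (cur v (Suc i)) = Some e'"
  then show "r e = s e'" using nxt_Some[OF a(2)] by simp
next
  assume "nxt (cur v 0) = None" then show "sink v" using nxt_None by simp
next
  fix i e assume a: "nxt (cur v i) = Some e" "nxt (cur v (Suc i)) = None"
  then show "sink (r e)" using nxt_None[OF a(2)] by simp
qed

end

context lpa begin

lemma beta_step: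
  assumes gu: "good u" and un: "fmult (fstar u) u \<approx> lpa_one E0"
    and ess: "ess_unique_partition_of_unit R"
    and N: "\<forall>w\<in>fsupp u. length w \<le> N" and bB: "\<beta> \<in> B N"
  shows "\<exists>lam \<alpha>. \<alpha> \<in> paths E0 E1 r s \<and> lam \<in> R \<and> cmod lam = 1 \<and>
            fmult u (path_elt \<beta>) \<approx> fsmult lam (path_elt \<alpha>)"
proof -
  define S where "S = fsupp u"
  have finS: "finite S" using gu unfolding good_def S_def by simp
  have SG: "set w \<subseteq> G" if "w \<in> S" for w using gu that unfolding good_def S_def fsupp_def by blast
  have uR: "u w \<in> R" for w using gu unfolding good_def by blast
  have bp: "\<beta> \<in> paths E0 E1 r s" using bB by (rule B_paths)
  have cond: "nghost w \<le> plen \<beta> \<or> sink (rend \<beta>)" if "w \<in> S" for w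
  proof -
    have "nghost w \<le> N" using nghost_le[of w] N that unfolding S_def by force
    then show ?thesis using bB unfolding B_def by auto
  qed
  define ok where "ok w \<longleftrightarrow> (\<exists>q'. q' \<in> paths E0 E1 r s \<and> rend q' = rend \<beta> \<and> mono (w @ cw \<beta>) \<approx> mono (cw q'))" for w
  define qf where "qf w = (SOME q'. q' \<in> paths E0 E1 r s \<and> rend q' = rend \<beta> \<and> mono (w @ cw \<beta>) \<approx> mono (cw q'))" for w
  have qf: "qf w \<in> paths E0 E1 r s \<and> rend (qf w) = rend \<beta> \<and> mono (w @ cw \<beta>) \<approx> mono (cw (qf w))" if "ok w" for w
    using that unfolding ok_def qf_def by (rule someI_ex)
  define Zf where "Zf w = (if ok w then path_elt (qf w) else Z)" for w
  have step1: "fmult u (path_elt \<beta>) = fsum (\<lambda>w. fsmult (u w) (mono (w @ cw \<beta>))) S"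
    unfolding path_elt_cw
    by (subst fmult_expand_left[OF finS]) (simp_all add: S_def mono_mult)
  have step2: "fsum (\<lambda>w. fsmult (u w) (mono (w @ cw \<beta>))) S \<approx> fsum (\<lambda>w. fsmult (u w) (Zf w)) S"
  proof (rule eq_fsum[OF finS])
    fix w assume w: "w \<in> S"
    have "mono (w @ cw \<beta>) \<approx> Zf w"
    proof (cases "ok w")
      case True then show ?thesis using qf[OF True] by (simp add: Zf_def path_elt_cw)
    next
      case False
      then show ?thesis using L[OF SG[OF w] bp cond[OF w]] unfolding ok_def Zf_def by auto
    qed
    then show "fsmult (u w) (mono (w @ cw \<beta>)) \<approx> fsmult (u w) (Zf w)" by (rule eq_smult[OF uR])
  qed
  define S1 where "S1 = {w \<in> S. ok w}"
  define Q where "Q = qf ` S1"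
  define mu where "mu p = (\<Sum>w\<in>{w \<in> S1. qf w = p}. u w)" for p
  have finS1: "finite S1" using finS unfolding S1_def by simp
  have finQ: "finite Q" unfolding Q_def using finS1 by simp
  have Qp: "p \<in> paths E0 E1 r s \<and> rend p = rend \<beta>" if "p \<in> Q" for p
    using that qf unfolding Q_def S1_def by auto
  have muR: "mu p \<in> R" for p unfolding mu_def by (rule Rsum) (rule uR)
  define X where "X = fsum (\<lambda>p. fsmult (mu p) (path_elt p)) Q"
  have step3: "fsum (\<lambda>w. fsmult (u w) (Zf w)) S = X"
  proof
    fix x
    have "fsum (\<lambda>w. fsmult (u w) (Zf w)) S x = (\<Sum>w\<in>S. u w * Zf w x)"
      unfolding fsum_def fsmult_def ..
    also have "\<dots> = (\<Sum>w\<in>S1. u w * path_elt (qf w) x)"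
      by (rule sum.mono_neutral_cong_right) (use finS in \<open>auto simp: S1_def Zf_def\<close>)
    also have "\<dots> = (\<Sum>p\<in>Q. \<Sum>w\<in>{w \<in> S1. qf w = p}. u w * path_elt (qf w) x)"
      unfolding Q_def by (rule sum.image_gen[OF finS1])
    also have "\<dots> = (\<Sum>p\<in>Q. mu p * path_elt p x)"
      unfolding mu_def sum_distrib_right by (intro sum.cong refl) auto
    also have "\<dots> = X x" unfolding X_def fsum_def fsmult_def ..
    finally show "fsum (\<lambda>w. fsmult (u w) (Zf w)) S x = X x" .
  qed
  have eqX: "fmult u (path_elt \<beta>) \<approx> X" using step1 step2 step3 by simp
  define z0 :: "('v,'e) st" where "z0 = ((rend \<beta>, \<lambda>i. nxt (cur (rend \<beta>) i)), 0)"
  have vz0: "valid z0" unfolding z0_def by (rule valid_exists[OF rend_E0[OF bp]])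
  have st0: "fst (fst z0) = rend \<beta>" unfolding z0_def by simp
  define z2 where "z2 = tg \<beta> z0"
  have actb: "act (cw \<beta>) z0 = Some z2" unfolding z2_def by (rule act_path[OF bp st0[symmetric]])
  have vz2: "valid z2" by (rule valid_act[OF cw_gens[OF bp] vz0 actb])
  have finP: "finite (fsupp (fsmult (mu p) (path_elt p)))" for p
    by (rule finite_subset[OF fsupp_fsmult]) (simp add: path_elt_cw fsupp_mono)
  have finX: "finite (fsupp X)" unfolding X_def by (rule finite_fsupp_fsum[OF finQ finP])
  have MX: "M X y z0 = (\<Sum>p\<in>Q. mu p * ind (tg p z0 = y))" for y
  proof -
    have "M X y z0 = (\<Sum>p\<in>Q. M (fsmult (mu p) (path_elt p)) y z0)"
      unfolding X_def by (rule M_fsum[OF finQ finP])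
    also have "\<dots> = (\<Sum>p\<in>Q. mu p * ind (tg p z0 = y))"
    proof (rule sum.cong[OF refl])
      fix p assume p: "p \<in> Q"
      have "act (cw p) z0 = Some (tg p z0)" using Qp[OF p] st0 by (intro act_path) auto
      then show "M (fsmult (mu p) (path_elt p)) y z0 = mu p * ind (tg p z0 = y)"
        by (simp add: M_fsmult path_elt_cw fsupp_mono M_mono)
    qed
    finally show ?thesis .
  qed
  have finUb: "finite (fsupp (fmult u (path_elt \<beta>)))"
    using good_fmult[OF gu good_path[OF bp]] unfolding good_def by simp
  have MXU: "M X y z0 = M u y z2" for y
  proof -
    have "M X y z0 = M (fmult u (path_elt \<beta>)) y z0" using M_eq[OF finUb finX eqX vz0] by simp
    also have "\<dots> = M u y z2" unfolding path_elt_cw using actb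
      by (subst M_rmono) (simp_all add: finS[unfolded S_def])
    finally show ?thesis .
  qed
  define T where "T = {t. \<exists>w\<in>S. act w z2 = Some t}"
  have finT: "finite T"
  proof -
    have "T \<subseteq> (\<lambda>w. the (act w z2)) ` S" unfolding T_def by force
    then show ?thesis using finS finite_subset by blast
  qed
  have n1: "(\<Sum>t\<in>T. (cmod (M u t z2))\<^sup>2) = 1" unfolding T_def S_def by (rule norm_eq1[OF gu un vz2])
  define tq where "tq p = tg p z0" for p
  have injtq: "inj_on tq Q" unfolding inj_on_def tq_def using Qp tg_inj by blast
  have n2: "(\<Sum>p\<in>Q. (cmod (mu p))\<^sup>2) = 1"
  proof -
    have outT: "M u t z2 = 0" if "t \<notin> T" for t
      unfolding M_def using that unfolding T_def S_def ind_def by (auto intro!: sum.neutral)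
    have outQ: "M u t z2 = 0" if "t \<notin> tq ` Q" for t
    proof -
      have "\<forall>p\<in>Q. tg p z0 \<noteq> t" using that unfolding tq_def by auto
      then have "(\<Sum>p\<in>Q. mu p * ind (tg p z0 = t)) = 0" by (intro sum.neutral) (simp add: ind_def)
      then show ?thesis using MXU[of t] MX[of t] by simp
    qed
    have "(\<Sum>t\<in>T. (cmod (M u t z2))\<^sup>2) = (\<Sum>t\<in>T \<union> tq ` Q. (cmod (M u t z2))\<^sup>2)"
      by (rule sum.mono_neutral_left) (use finT finQ outT in auto)
    also have "\<dots> = (\<Sum>t\<in>tq ` Q. (cmod (M u t z2))\<^sup>2)"
      by (rule sum.mono_neutral_right) (use finT finQ outQ in auto)
    also have "\<dots> = (\<Sum>p\<in>Q. (cmod (M u (tq p) z2))\<^sup>2)" using sum.reindex[OF injtq, of "\<lambda>t. (cmod (M u t z2))\<^sup>2"] by simp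
    also have "\<dots> = (\<Sum>p\<in>Q. (cmod (mu p))\<^sup>2)"
    proof (rule sum.cong[OF refl])
      fix p assume p: "p \<in> Q"
      have "M u (tq p) z2 = (\<Sum>p'\<in>Q. mu p' * ind (tg p' z0 = tq p))" using MXU MX by simp
      also have "\<dots> = (\<Sum>p'\<in>Q. if p' = p then mu p else 0)"
      proof (rule sum.cong[OF refl])
        fix p' assume p': "p' \<in> Q"
        have "(tg p' z0 = tq p) = (p' = p)" using injtq p p' unfolding inj_on_def tq_def by blast
        then show "mu p' * ind (tg p' z0 = tq p) = (if p' = p then mu p else 0)" by (simp add: ind_def)
      qed
      also have "\<dots> = mu p" using p finQ by simp
      finally show "(cmod (M u (tq p) z2))\<^sup>2 = (cmod (mu p))\<^sup>2" by simp
    qed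
    finally show ?thesis using n1 by simp
  qed
  obtain h where h: "bij_betw h {0..<card Q} Q" using ex_bij_betw_nat_finite[OF finQ] by blast
  have hs: "(\<Sum>i<card Q. (cmod (mu (h i)))\<^sup>2) = 1"
    using sum.reindex_bij_betw[OF h, of "\<lambda>p. (cmod (mu p))\<^sup>2"] n2 by (simp add: atLeast0LessThan)
  have "\<exists>j<card Q. \<forall>i<card Q. i \<noteq> j \<longrightarrow> mu (h i) = 0"
    apply (rule ess[unfolded ess_unique_partition_of_unit_def, rule_format])
    using muR hs by simp_all
  then obtain j where j: "j < card Q" "\<And>i. i < card Q \<Longrightarrow> i \<noteq> j \<Longrightarrow> mu (h i) = 0" by blast
  define p0 where "p0 = h j"
  have p0Q: "p0 \<in> Q" using h j(1) unfolding p0_def bij_betw_def by auto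
  have zero: "mu p = 0" if pQ: "p \<in> Q" and pn: "p \<noteq> p0" for p
  proof -
    have "p \<in> h ` {0..<card Q}" using h pQ unfolding bij_betw_def by simp
    then obtain i where i: "i < card Q" "p = h i" by auto
    have "i \<noteq> j" using i pn unfolding p0_def by auto
    then show ?thesis using j(2) i by simp
  qed
  have "(\<Sum>p\<in>Q. (cmod (mu p))\<^sup>2) = (\<Sum>p\<in>Q. if p = p0 then (cmod (mu p0))\<^sup>2 else 0)"
    by (rule sum.cong[OF refl]) (auto simp: zero)
  also have "\<dots> = (cmod (mu p0))\<^sup>2" using p0Q finQ by simp
  finally have "(cmod (mu p0))\<^sup>2 = 1" using n2 by simp
  then have "cmod (mu p0) = 1 \<or> cmod (mu p0) = - 1" by (simp only: power2_eq_1_iff)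
  then have c1: "cmod (mu p0) = 1" using norm_ge_zero[of "mu p0"] by linarith
  have Xeq: "X = fsmult (mu p0) (path_elt p0)"
  proof
    fix x
    have "X x = (\<Sum>p\<in>Q. mu p * path_elt p x)" unfolding X_def fsum_def fsmult_def ..
    also have "\<dots> = (\<Sum>p\<in>Q. if p = p0 then mu p0 * path_elt p0 x else 0)"
      by (rule sum.cong[OF refl]) (auto simp: zero)
    also have "\<dots> = mu p0 * path_elt p0 x" using p0Q finQ by simp
    finally show "X x = fsmult (mu p0) (path_elt p0) x" unfolding fsmult_def .
  qed
  have "fmult u (path_elt \<beta>) \<approx> fsmult (mu p0) (path_elt p0)" using eqX unfolding Xeq .
  then show ?thesis
    using Qp[OF p0Q] muR[of p0] c1 by (intro exI[of _ "mu p0"] exI[of _ p0] conjI) simp_all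
qed

end

lemma fsum_bij: "bij_betw h A B \<Longrightarrow> fsum (\<lambda>i. f (h i)) A = fsum f B"
  unfolding fsum_def by (rule ext) (rule sum.reindex_bij_betw)

lemma unit_scalar:
  assumes "cmod l = 1"
  shows "fmult (fsmult l a) (fstar (fsmult l a)) = fmult a (fstar a)"
proof -
  have "l * cnj l = 1" using complex_norm_square[of l] assms by simp
  then have "cnj l * l = 1" by (simp add: mult.commute)
  then show ?thesis
    unfolding fstar_fsmult fmult_fsmult_left fmult_fsmult_right
    unfolding fsmult_def by (simp add: mult.assoc[symmetric])
qed

context lpa begin

declare eq_trans[trans]

lemma main:
  assumes ess: "ess_unique_partition_of_unit R" and gu: "good u" and u0: "u [] = 0"
    and h1: "fmult u (fstar u) \<approx> lpa_one E0" and h2: "fmult (fstar u) u \<approx> lpa_one E0"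
  shows "\<exists>(n::nat) (\<alpha>::nat \<Rightarrow> ('v,'e) path) (\<beta>::nat \<Rightarrow> ('v,'e) path) (c::nat \<Rightarrow> complex).
           (\<forall>i<n. \<alpha> i \<in> paths E0 E1 r s \<and> \<beta> i \<in> paths E0 E1 r s \<and> c i \<in> R \<and> cmod (c i) = 1) \<and>
           lpa_eq R E0 E1 r s u
             (fsum (\<lambda>i. fsmult (c i) (fmult (path_elt (\<alpha> i)) (fstar (path_elt (\<beta> i))))) {..<n}) \<and>
           lpa_eq R E0 E1 r s (fsum (\<lambda>i. fmult (path_elt (\<alpha> i)) (fstar (path_elt (\<alpha> i)))) {..<n})
             (lpa_one E0) \<and>
           lpa_eq R E0 E1 r s (fsum (\<lambda>i. fmult (path_elt (\<beta> i)) (fstar (path_elt (\<beta> i)))) {..<n})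
             (lpa_one E0)"
proof -
  have finS: "finite (fsupp u)" using gu unfolding good_def by simp
  define N where "N = (\<Sum>w\<in>fsupp u. length w)"
  have N: "\<forall>w\<in>fsupp u. length w \<le> N" unfolding N_def using finS by (auto intro: member_le_sum)
  have "\<forall>b\<in>B N. \<exists>x. snd x \<in> paths E0 E1 r s \<and> fst x \<in> R \<and> cmod (fst x) = 1 \<and>
            fmult u (path_elt b) \<approx> fsmult (fst x) (path_elt (snd x))"
    using beta_step[OF gu h2 ess N] by fastforce
  then obtain F where F: "\<And>b. b \<in> B N \<Longrightarrow> snd (F b) \<in> paths E0 E1 r s \<and> fst (F b) \<in> R \<and> cmod (fst (F b)) = 1 \<and>
            fmult u (path_elt b) \<approx> fsmult (fst (F b)) (path_elt (snd (F b)))"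
    by metis
  define lam where "lam b = fst (F b)" for b
  define alp where "alp b = snd (F b)" for b
  have F': "alp b \<in> paths E0 E1 r s" "lam b \<in> R" "cmod (lam b) = 1"
     "fmult u (path_elt b) \<approx> fsmult (lam b) (path_elt (alp b))" if "b \<in> B N" for b
    using F[OF that] unfolding lam_def alp_def by auto
  obtain h where h0: "bij_betw h {0..<card (B N)} (B N)" using ex_bij_betw_nat_finite[OF finite_B] by blast
  define n where "n = card (B N)"
  have h: "bij_betw h {..<n} (B N)" using h0 unfolding n_def by (simp add: atLeast0LessThan)
  have hB: "h i \<in> B N" if "i < n" for i using h that unfolding bij_betw_def by auto
  have goodP: "good (path_elt b)" if "b \<in> B N" for b using good_path[OF B_paths[OF that]] .
  have F3: "fsum (\<lambda>i. fmult (path_elt (h i)) (fstar (path_elt (h i)))) {..<n} \<approx> lpa_one E0"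
    using fsum_bij[OF h, of PP] partition_one[of N] unfolding PP_def by simp
  have a1: "u \<approx> fmult u (lpa_one E0)" by (rule eq_sym[OF unit_right[OF gu u0]])
  have a2: "fmult u (lpa_one E0) \<approx> fmult u (fsum PP (B N))"
    by (rule eq_lmult[OF gu eq_sym[OF partition_one]])
  have a3: "fmult u (fsum PP (B N)) \<approx> fsum (\<lambda>b. fsmult (lam b) (fmult (path_elt (alp b)) (fstar (path_elt b)))) (B N)"
    unfolding fmult_fsum_right
  proof (rule eq_fsum[OF finite_B])
    fix b assume b: "b \<in> B N"
    have e1: "fmult u (PP b) = fmult (fmult u (path_elt b)) (fstar (path_elt b))"
      unfolding PP_def by (rule fmult_assoc[OF finS, symmetric])
    have e2: "fmult (fmult u (path_elt b)) (fstar (path_elt b)) \<approx> fmult (fsmult (lam b) (path_elt (alp b))) (fstar (path_elt b))"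
      by (rule eq_rmult[OF good_fstar[OF goodP[OF b]] F'(4)[OF b]])
    show "fmult u (PP b) \<approx> fsmult (lam b) (fmult (path_elt (alp b)) (fstar (path_elt b)))"
      using e1 e2 by (simp add: fmult_fsmult_left)
  qed
  have F1: "u \<approx> fsum (\<lambda>i. fsmult (lam (h i)) (fmult (path_elt (alp (h i))) (fstar (path_elt (h i))))) {..<n}"
    using eq_trans[OF a1 eq_trans[OF a2 a3]] fsum_bij[OF h, of "\<lambda>b. fsmult (lam b) (fmult (path_elt (alp b)) (fstar (path_elt b)))"]
    by simp
  have gfu: "good (fstar u)" by (rule good_fstar[OF gu])
  have b1: "PP (alp b) \<approx> fmult (fmult u (PP b)) (fstar u)" if b: "b \<in> B N" for b
  proof -
    define W where "W = fsmult (lam b) (path_elt (alp b))"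
    define Y where "Y = fmult u (path_elt b)"
    have YW: "Y \<approx> W" unfolding Y_def W_def using F'(4)[OF b] .
    have gW: "good W" unfolding W_def by (rule good_fsmult[OF F'(2)[OF b] good_path[OF F'(1)[OF b]]])
    have gY: "good Y" unfolding Y_def by (rule good_fmult[OF gu goodP[OF b]])
    have finY: "finite (fsupp Y)" using gY unfolding good_def by simp
    have c1: "PP (alp b) = fmult W (fstar W)" unfolding PP_def W_def using unit_scalar[OF F'(3)[OF b], of "path_elt (alp b)"] by simp
    have c2: "fmult W (fstar W) \<approx> fmult Y (fstar W)" by (rule eq_rmult[OF good_fstar[OF gW] eq_sym[OF YW]])
    have c3: "fmult Y (fstar W) \<approx> fmult Y (fstar Y)" by (rule eq_lmult[OF gY eq_star[OF eq_sym[OF YW]]])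
    have c4: "fmult Y (fstar Y) = fmult (fmult u (PP b)) (fstar u)"
    proof -
      have "fmult Y (fstar Y) = fmult Y (fmult (fstar (path_elt b)) (fstar u))"
        unfolding Y_def by (simp add: fstar_fmult)
      also have "\<dots> = fmult (fmult Y (fstar (path_elt b))) (fstar u)" by (rule fmult_assoc[OF finY, symmetric])
      also have "fmult Y (fstar (path_elt b)) = fmult u (PP b)"
        unfolding Y_def PP_def by (rule fmult_assoc[OF finS])
      finally show ?thesis .
    qed
    show ?thesis using eq_trans[OF c2 c3] c1 c4 by simp
  qed
  have b2: "fsum (\<lambda>b. PP (alp b)) (B N) \<approx> fsum (\<lambda>b. fmult (fmult u (PP b)) (fstar u)) (B N)"
    by (rule eq_fsum[OF finite_B b1])
  have b3: "fsum (\<lambda>b. fmult (fmult u (PP b)) (fstar u)) (B N) = fmult (fmult u (fsum PP (B N))) (fstar u)"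
    by (simp add: fmult_fsum_left fmult_fsum_right)
  have b4: "fmult (fmult u (fsum PP (B N))) (fstar u) \<approx> fmult (fmult u (lpa_one E0)) (fstar u)"
    by (rule eq_rmult[OF gfu eq_lmult[OF gu partition_one]])
  have b5: "fmult (fmult u (lpa_one E0)) (fstar u) \<approx> fmult u (fstar u)"
    by (rule eq_rmult[OF gfu unit_right[OF gu u0]])
  have F2b: "fsum (\<lambda>b. PP (alp b)) (B N) \<approx> lpa_one E0"
    using eq_trans[OF b2 eq_trans[OF _ eq_trans[OF b4 eq_trans[OF b5 h1]]]] b3 eq_refl by simp
  have F2: "fsum (\<lambda>i. fmult (path_elt (alp (h i))) (fstar (path_elt (alp (h i))))) {..<n} \<approx> lpa_one E0"
    using F2b fsum_bij[OF h, of "\<lambda>b. PP (alp b)"] unfolding PP_def by simp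
  show ?thesis
    apply (rule exI[of _ n], rule exI[of _ "\<lambda>i. alp (h i)"], rule exI[of _ h], rule exI[of _ "\<lambda>i. lam (h i)"])
    using F1 F2 F3 F'(1-3)[OF hB] B_paths[OF hB] by auto
qed

end

theorem proposition4p4:
  fixes R :: "complex set" and E0 :: "'v set" and E1 :: "'e set"
    and r s :: "'e \<Rightarrow> 'v" and u :: "('v,'e) fa"
  assumes "finite_graph E0 E1 r s"
    and "conj_subring R"
    and "ess_unique_partition_of_unit R"
    and "u \<in> free_alg R E0 E1"
    and "lpa_eq R E0 E1 r s (fmult u (fstar u)) (lpa_one E0)"
    and "lpa_eq R E0 E1 r s (fmult (fstar u) u) (lpa_one E0)"
  shows "\<exists>(n::nat) (\<alpha>::nat \<Rightarrow> ('v,'e) path) (\<beta>::nat \<Rightarrow> ('v,'e) path) (c::nat \<Rightarrow> complex).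
           (\<forall>i<n. \<alpha> i \<in> paths E0 E1 r s \<and> \<beta> i \<in> paths E0 E1 r s \<and> c i \<in> R \<and> cmod (c i) = 1) \<and>
           lpa_eq R E0 E1 r s u
             (fsum (\<lambda>i. fsmult (c i) (fmult (path_elt (\<alpha> i)) (fstar (path_elt (\<beta> i))))) {..<n}) \<and>
           lpa_eq R E0 E1 r s (fsum (\<lambda>i. fmult (path_elt (\<alpha> i)) (fstar (path_elt (\<alpha> i)))) {..<n})
             (lpa_one E0) \<and>
           lpa_eq R E0 E1 r s (fsum (\<lambda>i. fmult (path_elt (\<beta> i)) (fstar (path_elt (\<beta> i)))) {..<n})
             (lpa_one E0)"
proof -
  interpret lpa R E0 E1 r s using assms(1,2) by unfold_locales
  have gu: "good u" and u0: "u [] = 0"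
    using assms(4) unfolding free_alg_def good_def fsupp_def by auto
  show ?thesis by (rule main[OF assms(3) gu u0 assms(5,6)])
qed

end
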